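(* For every non-decreasing function $f:(0,1)\to(0,1)$ there is a non-decreasing function $f':(0,1)\to(0,1)$ with $f'(x)<f(x)$ for all $x\in(0,1)$ such that the following holds. Let $\rho,\nu,\tau,\alpha\in(0,1)$ and $n,k,\ell\in\mathbb N$ satisfy $1/n\leq\rho\leq f'(\nu)$, $\nu\leq\tau\leq f'(\alpha)$. Then there exist $\zeta,\delta,\gamma,\beta,\eta$ with $\rho\leq f(\eta)$, $\eta\leq f(\beta)$, $\beta\leq f(\gamma)$, $\gamma\leq f(\zeta)$, $\zeta\leq f(\nu)$ and $\tau<\delta<\alpha$, such that for every $n$-vertex $D$-regular graph $G$ with $D\geq\alpha n$, every robust partition $\mathcal V$ of $G$ with parameters $\rho,\nu,\tau,k,\ell$ is a clustering of $G$ with parameters $\zeta,\delta,\gamma,\beta,\eta$ (with $c_{\min}=\alpha$, where for each bipartite part $W_j$ its bipartition $A_j,B_j$ serves as the partition witnessing that $W_j$ is $\beta$-almost-bipartite, and each part $V_i$ is $\gamma$-far-from-bipartite).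
   Context: For a graph $G$ and $S,T\subseteq V(G)$: $\overline{S}=V(G)\setminus S$; $d_S(v)=|N(v)\cap S|$; $E_G(S,T)=\{xy\in E(G):x\in S,y\in T\}$, $e_G(S,T)=|E_G(S,T)|$. For an $N$-vertex graph $H$, $\mathrm{RN}_{\nu,H}(S)=\{v:d_S(v)\ge\nu N\}$; $H$ is a robust $(\nu,\tau)$-expander if $|\mathrm{RN}_{\nu,H}(S)|\ge|S|+\nu N$ for all $S$ with $\tau N\le|S|\le(1-\tau)N$; $H$ is a bipartite robust $(\nu,\tau)$-expander with bipartition $A,B$ if this inequality holds for all $S\subseteq A$ with $\tau|A|\le|S|\le(1-\tau)|A|$. $\mathcal V=\{V_1,\dots,V_k,W_1,\dots,W_\ell\}$ is a robust partition of an $n$-vertex $D$-regular $G$ with parameters $\rho,\nu,\tau,k,\ell$ ($0<\rho\le\nu\le\tau<1$) if: (D1) it partitions $V(G)$; (D2) each $V_i$ satisfies $|V_i|\ge\sqrt\rho n$, $e_G(V_i,\overline{V_i})\le\rho n^2$ and $G[V_i]$ is a robust $(\nu,\tau)$-expander; (D3) each $W_j$ has a partition $A_j,B_j$ with $|A_j|,|B_j|\ge\sqrt\rho n$, $||A_j|-|B_j||\le\rho n$, $e_G(A_j,\overline{B_j})+e_G(B_j,\overline{A_j})\le\rho n^2$ and $G[W_j]$ a bipartite robust $(\nu,\tau)$-expander with bipartition $A_j,B_j$; (D4) $d_X(x)\ge d_{X'}(x)$ for all $X,X'\in\mathcal V$, $x\in X$; (D5) $d_{B_j}(u)\ge d_{A_j}(u)$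 for $u\in A_j$, $d_{A_j}(v)\ge d_{B_j}(v)$ for $v\in B_j$; (D6) $k+2\ell\le\lfloor(1+\rho^{1/3})n/D\rfloor$; (D7) each $X\in\mathcal V$ has all but at most $\rho n$ vertices with $d_X(x)\ge D-\rho n$. Clustering: a cut of $A\subseteq V(G)$ is a partition $X,Y$ of $A$ into non-empty sets; it is $\zeta$-sparse if $e_G(X,Y)\le\zeta|X||Y|$. $A$ is $\beta$-almost-bipartite if there is a partition $X,Y$ of $A$ such that $G[A]$ has at most $\beta n^2$ edges not in $E_G(X,Y)$; otherwise $A$ is $\beta$-far-from-bipartite. For $c_{\min}\in(0,1)$ and $G$ an $n$-vertex $D$-regular graph with $D\ge c_{\min}n$, a clustering of $G$ with parameters $\zeta,\delta,\gamma,\beta,\eta$ is a partition $\{A_1,\dots,A_r\}$ of $V(G)$ into non-empty sets such that: (a) at most $\eta n^2$ edges of $G$ have ends in different $A_i$; (b) $\delta(G[A_i])\ge\delta n$ for each $i$; (c) no $A_i$ has a $\zeta$-sparse cut; (d) each $A_i$ is either $\beta$-almost-bipartite (with a specified witnessing partition) or $\gamma$-far-from-bipartite. *)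

theory Defs
  imports Complex_Main
begin

definition graph :: "'a set \<Rightarrow> ('a \<Rightarrow> 'a \<Rightarrow> bool) \<Rightarrow> bool" where
  "graph V E \<longleftrightarrow> finite V \<and> (\<forall>x y. E x y \<longrightarrow> x \<in> V \<and> y \<in> V \<and> x \<noteq> y \<and> E y x)"

definition deg :: "('a \<Rightarrow> 'a \<Rightarrow> bool) \<Rightarrow> 'a set \<Rightarrow> 'a \<Rightarrow> nat" where
  "deg E S v = card {u \<in> S. E v u}"

definition regular :: "'a set \<Rightarrow> ('a \<Rightarrow> 'a \<Rightarrow> bool) \<Rightarrow> nat \<Rightarrow> bool" where
  "regular V E D \<longleftrightarrow> (\<forall>v\<in>V. deg E V v = D)"

definition edges_between :: "('a \<Rightarrow> 'a \<Rightarrow> bool) \<Rightarrow> 'a set \<Rightarrow> 'a set \<Rightarrow> 'a set set" where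
  "edges_between E S T = {{x, y} | x y. E x y \<and> x \<in> S \<and> y \<in> T}"

definition e :: "('a \<Rightarrow> 'a \<Rightarrow> bool) \<Rightarrow> 'a set \<Rightarrow> 'a set \<Rightarrow> nat" where
  "e E S T = card (edges_between E S T)"

definition RN :: "('a \<Rightarrow> 'a \<Rightarrow> bool) \<Rightarrow> 'a set \<Rightarrow> real \<Rightarrow> 'a set \<Rightarrow> 'a set" where
  "RN E U \<nu> S = {v \<in> U. real (deg E S v) \<ge> \<nu> * real (card U)}"

definition robust_expander :: "('a \<Rightarrow> 'a \<Rightarrow> bool) \<Rightarrow> 'a set \<Rightarrow> real \<Rightarrow> real \<Rightarrow> bool" where
  "robust_expander E U \<nu> \<tau> \<longleftrightarrow>
    (\<forall>S. S \<subseteq> U \<and> \<tau> * real (card U) \<le> real (card S) \<and> real (card S) \<le> (1 - \<tau>) * real (card U) \<longrightarrow>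
       real (card (RN E U \<nu> S)) \<ge> real (card S) + \<nu> * real (card U))"

definition bip_robust_expander :: "('a \<Rightarrow> 'a \<Rightarrow> bool) \<Rightarrow> 'a set \<Rightarrow> 'a set \<Rightarrow> real \<Rightarrow> real \<Rightarrow> bool" where
  "bip_robust_expander E A B \<nu> \<tau> \<longleftrightarrow>
    (\<forall>S. S \<subseteq> A \<and> \<tau> * real (card A) \<le> real (card S) \<and> real (card S) \<le> (1 - \<tau>) * real (card A) \<longrightarrow>
       real (card (RN E (A \<union> B) \<nu> S)) \<ge> real (card S) + \<nu> * real (card (A \<union> B)))"

text \<open>The set of parts of \<V> = {V_1,...,V_k, W_1,...,W_l}, W_j = A_j \<union> B_j (indices 0-based).\<close>
definition parts :: "(nat \<Rightarrow> 'a set) \<Rightarrow> (nat \<Rightarrow> 'a set) \<Rightarrow> (nat \<Rightarrow> 'a set) \<Rightarrow> nat \<Rightarrow> nat \<Rightarrow> 'a set set" where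
  "parts Vs As Bs k l = Vs ` {..<k} \<union> (\<lambda>j. As j \<union> Bs j) ` {..<l}"

definition robust_partition ::
  "'a set \<Rightarrow> ('a \<Rightarrow> 'a \<Rightarrow> bool) \<Rightarrow> nat \<Rightarrow> real \<Rightarrow> real \<Rightarrow> real \<Rightarrow> nat \<Rightarrow> nat \<Rightarrow>
   (nat \<Rightarrow> 'a set) \<Rightarrow> (nat \<Rightarrow> 'a set) \<Rightarrow> (nat \<Rightarrow> 'a set) \<Rightarrow> bool" where
  "robust_partition V E D \<rho> \<nu> \<tau> k l Vs As Bs \<longleftrightarrow>
   (let n = real (card V); W = (\<lambda>j. As j \<union> Bs j); P = parts Vs As Bs k l in
     0 < \<rho> \<and> \<rho> \<le> \<nu> \<and> \<nu> \<le> \<tau> \<and> \<tau> < 1 \<and>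
     \<comment> \<open>(D1)\<close>
     \<Union> P = V \<and>
     (\<forall>i<k. \<forall>i'<k. i \<noteq> i' \<longrightarrow> Vs i \<inter> Vs i' = {}) \<and>
     (\<forall>j<l. \<forall>j'<l. j \<noteq> j' \<longrightarrow> W j \<inter> W j' = {}) \<and>
     (\<forall>i<k. \<forall>j<l. Vs i \<inter> W j = {}) \<and>
     (\<forall>j<l. As j \<inter> Bs j = {}) \<and>
     \<comment> \<open>(D2)\<close>
     (\<forall>i<k. real (card (Vs i)) \<ge> sqrt \<rho> * n \<and> real (e E (Vs i) (V - Vs i)) \<le> \<rho> * n\<^sup>2 \<and>
        robust_expander E (Vs i) \<nu> \<tau>) \<and>
     \<comment> \<open>(D3)\<close>
     (\<forall>j<l. real (card (As j)) \<ge> sqrt \<rho> * n \<and> real (card (Bs j)) \<ge> sqrt \<rho> * n \<and>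
        \<bar>real (card (As j)) - real (card (Bs j))\<bar> \<le> \<rho> * n \<and>
        real (e E (As j) (V - Bs j) + e E (Bs j) (V - As j)) \<le> \<rho> * n\<^sup>2 \<and>
        bip_robust_expander E (As j) (Bs j) \<nu> \<tau>) \<and>
     \<comment> \<open>(D4)\<close>
     (\<forall>X\<in>P. \<forall>X'\<in>P. \<forall>x\<in>X. deg E X x \<ge> deg E X' x) \<and>
     \<comment> \<open>(D5)\<close>
     (\<forall>j<l. (\<forall>u\<in>As j. deg E (Bs j) u \<ge> deg E (As j) u) \<and>
            (\<forall>v\<in>Bs j. deg E (As j) v \<ge> deg E (Bs j) v)) \<and>
     \<comment> \<open>(D6)\<close>
     real (k + 2 * l) \<le> of_int \<lfloor>(1 + root 3 \<rho>) * n / real D\<rfloor> \<and>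
     \<comment> \<open>(D7)\<close>
     (\<forall>X\<in>P. real (card {x \<in> X. real (deg E X x) < real D - \<rho> * n}) \<le> \<rho> * n))"

definition sparse_cut :: "('a \<Rightarrow> 'a \<Rightarrow> bool) \<Rightarrow> real \<Rightarrow> 'a set \<Rightarrow> 'a set \<Rightarrow> 'a set \<Rightarrow> bool" where
  "sparse_cut E \<zeta> A X Y \<longleftrightarrow> X \<noteq> {} \<and> Y \<noteq> {} \<and> X \<union> Y = A \<and> X \<inter> Y = {} \<and>
     real (e E X Y) \<le> \<zeta> * real (card X) * real (card Y)"

definition almost_bip_wit ::
  "'a set \<Rightarrow> ('a \<Rightarrow> 'a \<Rightarrow> bool) \<Rightarrow> real \<Rightarrow> 'a set \<Rightarrow> 'a set \<Rightarrow> 'a set \<Rightarrow> bool" where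
  "almost_bip_wit V E \<beta> A X Y \<longleftrightarrow> X \<union> Y = A \<and> X \<inter> Y = {} \<and>
     real (card (edges_between E A A - edges_between E X Y)) \<le> \<beta> * (real (card V))\<^sup>2"

definition almost_bipartite :: "'a set \<Rightarrow> ('a \<Rightarrow> 'a \<Rightarrow> bool) \<Rightarrow> real \<Rightarrow> 'a set \<Rightarrow> bool" where
  "almost_bipartite V E \<beta> A \<longleftrightarrow> (\<exists>X Y. almost_bip_wit V E \<beta> A X Y)"

definition far_from_bipartite :: "'a set \<Rightarrow> ('a \<Rightarrow> 'a \<Rightarrow> bool) \<Rightarrow> real \<Rightarrow> 'a set \<Rightarrow> bool" where
  "far_from_bipartite V E \<gamma> A \<longleftrightarrow> \<not> almost_bipartite V E \<gamma> A"

definition clustering ::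
  "'a set \<Rightarrow> ('a \<Rightarrow> 'a \<Rightarrow> bool) \<Rightarrow> real \<Rightarrow> real \<Rightarrow> real \<Rightarrow> real \<Rightarrow> real \<Rightarrow> 'a set set \<Rightarrow> bool" where
  "clustering V E \<zeta> \<delta> \<gamma> \<beta> \<eta> P \<longleftrightarrow>
    (let n = real (card V) in
     \<Union> P = V \<and> {} \<notin> P \<and> (\<forall>X\<in>P. \<forall>Y\<in>P. X \<noteq> Y \<longrightarrow> X \<inter> Y = {}) \<and>
     real (card {{x, y} | x y. E x y \<and> (\<exists>X\<in>P. x \<in> X \<and> y \<notin> X)}) \<le> \<eta> * n\<^sup>2 \<and>
     (\<forall>A\<in>P. \<forall>v\<in>A. real (deg E A v) \<ge> \<delta> * n) \<and>
     (\<forall>A\<in>P. \<not> (\<exists>X Y. sparse_cut E \<zeta> A X Y)) \<and>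
     (\<forall>A\<in>P. almost_bipartite V E \<beta> A \<or> far_from_bipartite V E \<gamma> A))"

end

theory Submission
  imports Defs
begin

lemma graph_fin: "graph V E \<Longrightarrow> finite V" by (simp add: graph_def)
lemma graph_E: "graph V E \<Longrightarrow> E x y \<Longrightarrow> x \<in> V \<and> y \<in> V \<and> x \<noteq> y \<and> E y x"
  by (simp add: graph_def)

lemma deg_set_fin: "graph V E \<Longrightarrow> finite {u\<in>S. E v u}"
  by (rule finite_subset[of _ V]) (auto dest: graph_E simp: graph_fin)

lemma deg_le_card: "finite S \<Longrightarrow> deg E S v \<le> card S"
  unfolding deg_def by (rule card_mono) auto

lemma deg_mono: "graph V E \<Longrightarrow> S \<subseteq> T \<Longrightarrow> deg E S v \<le> deg E T v"
  unfolding deg_def by (rule card_mono[OF deg_set_fin]) auto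

lemma deg_Un: assumes "graph V E" "S \<inter> T = {}"
  shows "deg E (S \<union> T) v = deg E S v + deg E T v"
proof -
  have "{u \<in> S \<union> T. E v u} = {u\<in>S. E v u} \<union> {u\<in>T. E v u}" by auto
  then show ?thesis unfolding deg_def using assms
    by (simp add: card_Un_disjoint deg_set_fin disjoint_iff)
qed

definition pairs :: "('a \<Rightarrow> 'a \<Rightarrow> bool) \<Rightarrow> 'a set \<Rightarrow> 'a set \<Rightarrow> ('a \<times> 'a) set" where
  "pairs E X Y = {(x,y). x \<in> X \<and> y \<in> Y \<and> E x y}"

lemma pairs_fin: "graph V E \<Longrightarrow> finite (pairs E X Y)"
  by (rule finite_subset[of _ "V \<times> V"]) (auto simp: pairs_def graph_fin dest: graph_E)

lemma card_pairs: assumes "graph V E" "finite X"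
  shows "card (pairs E X Y) = (\<Sum>x\<in>X. deg E Y x)"
proof -
  have "pairs E X Y = Sigma X (\<lambda>x. {y\<in>Y. E x y})" by (auto simp: pairs_def)
  then show ?thesis using assms by (simp add: card_SigmaI deg_set_fin deg_def)
qed

lemma edges_img: "edges_between E X Y = (\<lambda>(x,y). {x,y}) ` pairs E X Y"
  by (auto simp: edges_between_def pairs_def)

lemma edges_fin: "graph V E \<Longrightarrow> finite (edges_between E X Y)"
  by (simp add: edges_img pairs_fin)

lemma e_sym: assumes "graph V E" shows "e E X Y = e E Y X"
proof -
  have "edges_between E X Y = edges_between E Y X"
    using assms unfolding edges_between_def
    by (auto dest: graph_E)
  then show ?thesis by (simp add: e_def)
qed

lemma e_disj: assumes "graph V E" "finite X" "X \<inter> Y = {}"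
  shows "real (e E X Y) = (\<Sum>x\<in>X. real (deg E Y x))"
proof -
  have "inj_on (\<lambda>(x,y). {x,y}) (pairs E X Y)"
    using assms(3) unfolding inj_on_def pairs_def
    by (auto simp: doubleton_eq_iff)
  then have "e E X Y = card (pairs E X Y)"
    by (simp add: e_def edges_img card_image)
  then show ?thesis using card_pairs[OF assms(1,2)] by simp
qed

lemma e_inner: fixes E :: "'a::linorder \<Rightarrow> 'a \<Rightarrow> bool"
  assumes "graph V E" "finite X"
  shows "(\<Sum>x\<in>X. real (deg E Y x)) \<le> 2 * real (e E X Y)"
proof -
  let ?h = "\<lambda>(x::'a,y). ({x,y}, x < y)"
  have inj: "inj_on ?h (pairs E X Y)"
    unfolding inj_on_def pairs_def
    by (auto simp: doubleton_eq_iff dest: graph_E[OF assms(1)])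
  have sub: "?h ` pairs E X Y \<subseteq> edges_between E X Y \<times> UNIV"
    by (auto simp: edges_img)
  have "card (pairs E X Y) = card (?h ` pairs E X Y)" using inj by (simp add: card_image)
  also have "\<dots> \<le> card (edges_between E X Y \<times> (UNIV :: bool set))"
    by (rule card_mono) (use sub edges_fin[OF assms(1)] in auto)
  also have "\<dots> = 2 * e E X Y" by (simp add: card_cartesian_product e_def)
  finally have "card (pairs E X Y) \<le> 2 * e E X Y" .
  then have "real (card (pairs E X Y)) \<le> 2 * real (e E X Y)" by linarith
  then show ?thesis using card_pairs[OF assms] by simp
qed


lemma sum_ge_subset_const:
  assumes "finite Y" "S \<subseteq> Y" "\<forall>y\<in>S. c \<le> (g y :: real)" "\<forall>y\<in>Y. 0 \<le> g y"
  shows "real (card S) * c \<le> (\<Sum>y\<in>Y. g y)"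
proof -
  have fS: "finite S" using assms(1,2) finite_subset by blast
  have "real (card S) * c = (\<Sum>y\<in>S. c)" by simp
  also have "\<dots> \<le> (\<Sum>y\<in>S. g y)" using assms(3) by (intro sum_mono) auto
  also have "\<dots> \<le> (\<Sum>y\<in>Y. g y)" using assms by (intro sum_mono2) auto
  finally show ?thesis .
qed

lemma cut_small:
  assumes g: "graph V E" and UV: "U \<subseteq> V"
    and mind: "\<forall>v\<in>U. c * real (card V) \<le> real (deg E U v)"
    and XY: "X \<union> Y = U" "X \<inter> Y = {}" "X \<noteq> {}"
    and sX: "real (card X) < \<tau> * real (card U)"
    and z: "\<zeta> < c - \<tau>" "0 \<le> \<zeta>" "0 \<le> \<tau>"
  shows "\<zeta> * real (card X) * real (card Y) < real (e E X Y)"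
proof -
  let ?n = "real (card V)"
  have fV: "finite V" using g graph_fin by blast
  have fU: "finite U" using fV UV finite_subset by blast
  have fX: "finite X" and fY: "finite Y" using fU XY by auto
  have cU: "card U \<le> card V" using fV UV card_mono by blast
  have cY: "card Y \<le> card V" using fV UV XY card_mono[of V Y] by auto
  have cX0: "0 < card X" using fX XY by (simp add: card_gt_0_iff)
  have dx: "(c - \<tau>) * ?n \<le> real (deg E Y x)" if x: "x \<in> X" for x
  proof -
    have "deg E U x = deg E X x + deg E Y x" using deg_Un[OF g XY(2)] XY(1) by simp
    moreover have "deg E X x \<le> card X" using deg_le_card[OF fX] .
    moreover have "\<tau> * real (card U) \<le> \<tau> * ?n" using z(3) cU by (simp add: mult_left_mono)
    moreover have "c * ?n \<le> real (deg E U x)" using mind x XY(1) by auto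
    ultimately show ?thesis using sX by (simp add: algebra_simps)
  qed
  have "real (card X) * ((c - \<tau>) * ?n) \<le> (\<Sum>x\<in>X. real (deg E Y x))"
    by (rule sum_ge_subset_const[OF fX]) (use dx in auto)
  also have "\<dots> = real (e E X Y)" using e_disj[OF g fX XY(2)] by simp
  finally have 1: "real (card X) * ((c - \<tau>) * ?n) \<le> real (e E X Y)" .
  have n0: "0 < ?n" proof -
    have "card X \<le> card V" using fV UV XY card_mono[of V X] by auto
    then show ?thesis using cX0 by simp
  qed
  have "\<zeta> * real (card Y) \<le> \<zeta> * ?n" using cY z(2) by (simp add: mult_left_mono)
  also have "\<dots> < (c - \<tau>) * ?n" using z(1) n0 by simp
  finally have "\<zeta> * real (card Y) < (c - \<tau>) * ?n" .
  then have "real (card X) * (\<zeta> * real (card Y)) < real (card X) * ((c - \<tau>) * ?n)"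
    using cX0 by simp
  with 1 show ?thesis by (simp add: mult.assoc mult.left_commute)
qed

lemma cut_mid:
  assumes g: "graph V E" and UV: "U \<subseteq> V"
    and rob: "robust_expander E U \<nu> \<tau>"
    and XY: "X \<union> Y = U" "X \<inter> Y = {}" "X \<noteq> {}"
    and s1: "\<tau> * real (card U) \<le> real (card X)" and s2: "real (card X) \<le> (1 - \<tau>) * real (card U)"
    and z: "\<zeta> < \<nu>^2" "0 \<le> \<zeta>" "0 < \<nu>"
  shows "\<zeta> * real (card X) * real (card Y) < real (e E X Y)"
proof -
  let ?N = "real (card U)"
  let ?R = "RN E U \<nu> X"
  have fV: "finite V" using g graph_fin by blast
  have fU: "finite U" using fV UV finite_subset by blast
  have fX: "finite X" and fY: "finite Y" using fU XY by auto
  have cX0: "0 < card X" using fX XY by (simp add: card_gt_0_iff)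
  have N0: "0 < ?N" using cX0 fU XY card_mono[of U X] by auto
  have R: "real (card ?R) \<ge> real (card X) + \<nu> * ?N"
    using rob s1 s2 XY unfolding robust_expander_def by blast
  have RU: "?R \<subseteq> U" by (auto simp: RN_def)
  have fR: "finite ?R" using fU RU finite_subset by blast
  have "card ?R \<le> card ((?R - X) \<union> X)" by (rule card_mono) (use fR fX in auto)
  also have "\<dots> \<le> card (?R - X) + card X" by (rule card_Un_le)
  finally have "card ?R \<le> card (?R - X) + card X" .
  then have cR: "\<nu> * ?N \<le> real (card (?R - X))" using R by linarith
  have sub: "?R - X \<subseteq> Y" using RU XY by auto
  have "real (card (?R - X)) * (\<nu> * ?N) \<le> (\<Sum>y\<in>Y. real (deg E X y))"
    by (rule sum_ge_subset_const[OF fY sub]) (auto simp: RN_def)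
  also have "\<dots> = real (e E X Y)"
    using e_disj[OF g fY, of X] XY(2) e_sym[OF g, of X Y] by (simp add: Int_commute)
  finally have 1: "real (card (?R - X)) * (\<nu> * ?N) \<le> real (e E X Y)" .
  have "(\<nu> * ?N) * (\<nu> * ?N) \<le> real (card (?R - X)) * (\<nu> * ?N)"
    using cR z(3) N0 by (intro mult_right_mono) auto
  then have 2: "\<nu>^2 * ?N^2 \<le> real (e E X Y)" using 1 by (simp add: power2_eq_square algebra_simps)
  have cX: "card X \<le> card U" and cY: "card Y \<le> card U" using fU XY card_mono[of U X] card_mono[of U Y] by auto
  have "\<zeta> * real (card X) * real (card Y) \<le> \<zeta> * ?N * ?N"
    using z(2) cX cY by (intro mult_mono) (auto intro: mult_left_mono)
  also have "\<dots> < \<nu>^2 * ?N^2" using z(1) N0 by (simp add: power2_eq_square)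
  finally show ?thesis using 2 by linarith
qed


lemma edges_sym: "graph V E \<Longrightarrow> edges_between E X Y = edges_between E Y X"
  unfolding edges_between_def by (auto dest: graph_E)

lemma card_split: assumes "finite A" "A \<subseteq> X \<union> Y" "X \<inter> Y = {}"
  shows "card (X \<inter> A) + card (Y \<inter> A) = card A"
proof -
  have "A = (X \<inter> A) \<union> (Y \<inter> A)" using assms by auto
  moreover have "card ((X \<inter> A) \<union> (Y \<inter> A)) = card (X \<inter> A) + card (Y \<inter> A)"
    using assms by (intro card_Un_disjoint) auto
  ultimately show ?thesis by simp
qed

lemma no_cut_U:
  assumes g: "graph V E" and UV: "U \<subseteq> V"
    and rob: "robust_expander E U \<nu> \<tau>"
    and mind: "\<forall>v\<in>U. c * real (card V) \<le> real (deg E U v)"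
    and z: "\<zeta> < \<nu>^2" "\<zeta> < c - \<tau>" "0 \<le> \<zeta>" "0 < \<nu>" "0 \<le> \<tau>"
  shows "\<not> sparse_cut E \<zeta> U X Y"
proof
  assume sc: "sparse_cut E \<zeta> U X Y"
  then have XY: "X \<noteq> {}" "Y \<noteq> {}" "X \<union> Y = U" "X \<inter> Y = {}"
    and le: "real (e E X Y) \<le> \<zeta> * real (card X) * real (card Y)"
    unfolding sparse_cut_def by auto
  have fU: "finite U" using g graph_fin UV finite_subset by blast
  have cs: "card X + card Y = card U"
  proof -
    have "X \<inter> U = X" "Y \<inter> U = Y" using XY by auto
    then show ?thesis using card_split[OF fU, of X Y] XY by simp
  qed
  consider "real (card X) < \<tau> * real (card U)" | "real (card X) > (1 - \<tau>) * real (card U)"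
    | "\<tau> * real (card U) \<le> real (card X)" "real (card X) \<le> (1 - \<tau>) * real (card U)" by linarith
  then show False
  proof cases
    case 1
    show False using cut_small[OF g UV mind XY(3,4,1) 1 z(2,3,5)] le by linarith
  next
    case 2
    then have "real (card Y) < \<tau> * real (card U)" using cs by (simp add: algebra_simps)
    then have "\<zeta> * real (card Y) * real (card X) < real (e E Y X)"
      using cut_small[OF g UV mind, of Y X] XY z by (auto simp: Un_commute Int_commute)
    then show False using le e_sym[OF g, of X Y] by (simp add: mult_ac)
  next
    case 3
    show False using cut_mid[OF g UV rob XY(3,4,1) 3 z(1,3,4)] le by linarith
  qed
qed

lemma inner_big:
  fixes E :: "'a::linorder \<Rightarrow> 'a \<Rightarrow> bool"
  assumes g: "graph V E" and UV: "U \<subseteq> V" and U0: "U \<noteq> {}"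
    and rob: "robust_expander E U \<nu> \<tau>"
    and mind: "\<forall>v\<in>U. c * real (card V) \<le> real (deg E U v)"
    and XY: "X \<union> Y = U" "X \<inter> Y = {}" "card Y \<le> card X"
    and h: "\<gamma> * real (card V)^2 < \<nu>^2 * real (card U)^2 / 2"
      "\<gamma> * real (card V)^2 < real (card U) * (c - \<tau>) * real (card V) / 4"
      "\<tau> \<le> 1/2" "0 < \<nu>" "0 \<le> \<tau>" "\<tau> \<le> c"
  shows "\<gamma> * real (card V)^2 < real (e E X X)"
proof -
  let ?N = "real (card U)" and ?n = "real (card V)"
  have fV: "finite V" using g graph_fin by blast
  have fU: "finite U" using fV UV finite_subset by blast
  have fX: "finite X" and fY: "finite Y" using fU XY by auto
  have cs: "card X + card Y = card U"
  proof -
    have "X \<inter> U = X" "Y \<inter> U = Y" using XY by auto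
    then show ?thesis using card_split[OF fU, of X Y] XY by simp
  qed
  have N0: "0 < ?N" using fU U0 by (simp add: card_gt_0_iff)
  have UVc: "card U \<le> card V" using fV UV card_mono by blast
  have Xh: "?N / 2 \<le> real (card X)" using cs XY(3) by linarith
  have S: "(\<Sum>x\<in>X. real (deg E X x)) \<le> 2 * real (e E X X)" by (rule e_inner[OF g fX])
  show ?thesis
  proof (cases "real (card X) \<le> (1 - \<tau>) * ?N")
    case True
    let ?R = "RN E U \<nu> X"
    have "\<tau> * ?N \<le> (1/2) * ?N" using h(3) N0 by (intro mult_right_mono) auto
    then have "\<tau> * ?N \<le> real (card X)" using Xh by linarith
    then have R: "real (card ?R) \<ge> real (card X) + \<nu> * ?N"
      using rob True XY unfolding robust_expander_def by blast
    have RU: "?R \<subseteq> U" by (auto simp: RN_def)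
    have fR: "finite ?R" using fU RU finite_subset by blast
    have "card ?R \<le> card ((?R \<inter> X) \<union> Y)" by (rule card_mono) (use fX fY RU XY in auto)
    also have "\<dots> \<le> card (?R \<inter> X) + card Y" by (rule card_Un_le)
    finally have "\<nu> * ?N \<le> real (card (?R \<inter> X))" using R XY(3) by linarith
    moreover have "real (card (?R \<inter> X)) * (\<nu> * ?N) \<le> (\<Sum>x\<in>X. real (deg E X x))"
      by (rule sum_ge_subset_const[OF fX]) (auto simp: RN_def)
    moreover have "(\<nu> * ?N) * (\<nu> * ?N) \<le> real (card (?R \<inter> X)) * (\<nu> * ?N)"
      by (rule mult_right_mono) (use calculation h(4) N0 in auto)
    ultimately have "(\<nu> * ?N) * (\<nu> * ?N) \<le> (\<Sum>x\<in>X. real (deg E X x))"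
      by linarith
    then have "\<nu>^2 * ?N^2 / 2 \<le> real (e E X X)" using S by (simp add: power2_eq_square algebra_simps)
    then show ?thesis using h(1) by linarith
  next
    case False
    then have sY: "real (card Y) < \<tau> * ?N" using cs by (simp add: algebra_simps)
    have dx: "(c - \<tau>) * ?n \<le> real (deg E X x)" if x: "x \<in> X" for x
    proof -
      have "deg E U x = deg E X x + deg E Y x" using deg_Un[OF g XY(2)] XY(1) by simp
      moreover have "deg E Y x \<le> card Y" using deg_le_card[OF fY] .
      moreover have "\<tau> * ?N \<le> \<tau> * ?n" using h(5) UVc by (simp add: mult_left_mono)
      moreover have "c * ?n \<le> real (deg E U x)" using mind x XY(1) by auto
      ultimately show ?thesis using sY by (simp add: algebra_simps)
    qed
    have "real (card X) * ((c - \<tau>) * ?n) \<le> (\<Sum>x\<in>X. real (deg E X x))"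
      by (rule sum_ge_subset_const[OF fX]) (use dx in auto)
    moreover have "(?N / 2) * ((c - \<tau>) * ?n) \<le> real (card X) * ((c - \<tau>) * ?n)"
      using Xh h(6) by (intro mult_right_mono) auto
    ultimately have "?N * (c - \<tau>) * ?n / 4 \<le> real (e E X X)" using S by (simp add: algebra_simps)
    then show ?thesis using h(2) by linarith
  qed
qed

lemma far_U:
  fixes E :: "'a::linorder \<Rightarrow> 'a \<Rightarrow> bool"
  assumes g: "graph V E" and UV: "U \<subseteq> V" and U0: "U \<noteq> {}"
    and rob: "robust_expander E U \<nu> \<tau>"
    and mind: "\<forall>v\<in>U. c * real (card V) \<le> real (deg E U v)"
    and h: "\<gamma> * real (card V)^2 < \<nu>^2 * real (card U)^2 / 2"
      "\<gamma> * real (card V)^2 < real (card U) * (c - \<tau>) * real (card V) / 4"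
      "\<tau> \<le> 1/2" "0 < \<nu>" "0 \<le> \<tau>" "\<tau> \<le> c"
  shows "far_from_bipartite V E \<gamma> U"
  unfolding far_from_bipartite_def almost_bipartite_def
proof
  assume "\<exists>X Y. almost_bip_wit V E \<gamma> U X Y"
  then obtain X Y where w: "almost_bip_wit V E \<gamma> U X Y" by blast
  then have XY: "X \<union> Y = U" "X \<inter> Y = {}"
    and le: "real (card (edges_between E U U - edges_between E X Y)) \<le> \<gamma> * real (card V)^2"
    unfolding almost_bip_wit_def by auto
  have fin: "finite (edges_between E U U - edges_between E X Y)"
    using edges_fin[OF g] by blast
  have sub: "edges_between E Z Z \<subseteq> edges_between E U U - edges_between E X Y"
    if "Z = X \<or> Z = Y" for Z
    using that XY unfolding edges_between_def by (auto simp: doubleton_eq_iff)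
  have cz: "card (edges_between E Z Z) \<le> card (edges_between E U U - edges_between E X Y)"
    if "Z = X \<or> Z = Y" for Z using card_mono[OF fin sub[OF that]] .
  have lz: "real (e E Z Z) \<le> \<gamma> * real (card V)^2" if "Z = X \<or> Z = Y" for Z
  proof -
    have "real (e E Z Z) \<le> real (card (edges_between E U U - edges_between E X Y))"
      using cz[OF that] unfolding e_def by simp
    then show ?thesis using le by linarith
  qed
  show False
  proof (cases "card Y \<le> card X")
    case True
    show False using inner_big[OF g UV U0 rob mind XY True h] lz[of X] by simp
  next
    case False
    then have "card X \<le> card Y" by simp
    moreover have "Y \<union> X = U" "Y \<inter> X = {}" using XY by auto
    ultimately show False using inner_big[OF g UV U0 rob mind, of Y X \<gamma>, OF _ _ _ h] lz[of Y] by simp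
  qed
qed


lemma deg_split2: assumes g: "graph V E" and "B \<subseteq> X \<union> Y" "X \<inter> Y = {}"
  shows "deg E B x = deg E (X \<inter> B) x + deg E (Y \<inter> B) x"
proof -
  have "B = (X \<inter> B) \<union> (Y \<inter> B)" using assms by auto
  then have "deg E B x = deg E ((X \<inter> B) \<union> (Y \<inter> B)) x" by simp
  also have "\<dots> = deg E (X \<inter> B) x + deg E (Y \<inter> B) x" by (rule deg_Un[OF g]) (use assms(3) in auto)
  finally show ?thesis .
qed

lemma bip_small:
  assumes g: "graph V E" and AV: "A \<subseteq> V" and BV: "B \<subseteq> V" and AB: "A \<inter> B = {}"
    and mind: "\<forall>v\<in>A \<union> B. c * real (card V) \<le> real (deg E (A \<union> B) v)"
    and d5a: "\<forall>u\<in>A. deg E A u \<le> deg E B u" and d5b: "\<forall>v\<in>B. deg E B v \<le> deg E A v"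
    and XY: "X \<union> Y = A \<union> B" "X \<inter> Y = {}" "X \<noteq> {}"
    and sX: "real (card (X \<inter> A)) < \<tau> * real (card A)"
    and z: "0 \<le> \<zeta>" "0 \<le> \<tau>" "0 < c" "\<zeta> < c/4 - \<tau>" "2 * \<zeta> < c/2 - \<tau>" "\<tau> \<le> c/4"
  shows "\<zeta> * real (card X) * real (card Y) < real (e E X Y)"
proof -
  let ?n = "real (card V)"
  have fV: "finite V" using g graph_fin by blast
  have fA: "finite A" and fB: "finite B" using fV AV BV finite_subset by auto
  have "X \<subseteq> A \<union> B" "Y \<subseteq> A \<union> B" using XY(1) by blast+
  then have fX: "finite X" and fY: "finite Y" using fA fB finite_subset by blast+
  have cY: "card Y \<le> card V" using fV AV BV XY card_mono[of V Y] by auto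
  have cA: "card A \<le> card V" using fV AV card_mono by blast
  have cX0: "0 < card X" using fX XY by (simp add: card_gt_0_iff)
  have n0: "0 < ?n" using cX0 fV AV BV XY card_mono[of V X] by auto
  have "\<tau> * real (card A) \<le> \<tau> * ?n" using z(2) cA by (intro mult_left_mono) auto
  then have sXn: "real (card (X \<inter> A)) < \<tau> * ?n" using sX by linarith
  have hA: "c * ?n / 2 \<le> real (deg E B u)" if "u \<in> A" for u
  proof -
    have "deg E (A \<union> B) u = deg E A u + deg E B u" using deg_Un[OF g AB] .
    moreover have "c * ?n \<le> real (deg E (A \<union> B) u)" using mind that by blast
    moreover have "deg E A u \<le> deg E B u" using d5a that by blast
    ultimately show ?thesis by linarith
  qed
  have hB: "c * ?n / 2 \<le> real (deg E A u)" if "u \<in> B" for u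
  proof -
    have "deg E (A \<union> B) u = deg E A u + deg E B u" using deg_Un[OF g AB] .
    moreover have "c * ?n \<le> real (deg E (A \<union> B) u)" using mind that by blast
    moreover have "deg E B u \<le> deg E A u" using d5b that by blast
    ultimately show ?thesis by linarith
  qed
  have BXY: "B \<subseteq> X \<union> Y" "A \<subseteq> X \<union> Y" using XY by auto
  have dXB: "real (deg E Y x) \<ge> (c/2 - \<tau>) * ?n" if x: "x \<in> X \<inter> B" for x
  proof -
    have "deg E A x = deg E (X \<inter> A) x + deg E (Y \<inter> A) x" by (rule deg_split2[OF g BXY(2) XY(2)])
    moreover have "deg E (X \<inter> A) x \<le> card (X \<inter> A)" using fX by (intro deg_le_card) auto
    moreover have "deg E (Y \<inter> A) x \<le> deg E Y x" by (rule deg_mono[OF g]) auto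
    ultimately show ?thesis using hB[of x] x sXn by (simp add: algebra_simps)
  qed
  have S: "(\<Sum>x\<in>X. real (deg E Y x)) = real (e E X Y)" using e_disj[OF g fX XY(2)] by simp
  show ?thesis
  proof (cases "real (card (X \<inter> B)) < c * ?n / 4")
    case True
    have dX: "real (deg E Y x) \<ge> (c/4 - \<tau>) * ?n" if x: "x \<in> X" for x
    proof (cases "x \<in> A")
      case xA: True
      have "deg E B x = deg E (X \<inter> B) x + deg E (Y \<inter> B) x" by (rule deg_split2[OF g BXY(1) XY(2)])
      moreover have "deg E (X \<inter> B) x \<le> card (X \<inter> B)" using fX by (intro deg_le_card) auto
      moreover have "deg E (Y \<inter> B) x \<le> deg E Y x" by (rule deg_mono[OF g]) auto
      ultimately have "real (deg E Y x) \<ge> c * ?n / 4" using hA[OF xA] True by linarith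
      moreover have "(c/4 - \<tau>) * ?n \<le> c * ?n / 4" using z(2) n0 by (simp add: algebra_simps)
      ultimately show ?thesis by linarith
    next
      case False
      then have "x \<in> X \<inter> B" using x XY by auto
      from dXB[OF this] have "real (deg E Y x) \<ge> (c/2 - \<tau>) * ?n" .
      moreover have "(c/4 - \<tau>) * ?n \<le> (c/2 - \<tau>) * ?n" using z(3) n0 by (intro mult_right_mono) auto
      ultimately show ?thesis by linarith
    qed
    have L1: "real (card X) * ((c/4 - \<tau>) * ?n) \<le> real (e E X Y)"
      using sum_ge_subset_const[OF fX order_refl, where g="\<lambda>x. real (deg E Y x)" and c="(c/4 - \<tau>) * ?n"] dX S by auto
    have L2: "\<zeta> * real (card Y) < (c/4 - \<tau>) * ?n"
    proof -
      have "\<zeta> * real (card Y) \<le> \<zeta> * ?n" using cY z(1) by (simp add: mult_left_mono)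
      also have "\<dots> < (c/4 - \<tau>) * ?n" using z(4) n0 by simp
      finally show ?thesis .
    qed
    have "real (card X) * (\<zeta> * real (card Y)) < real (card X) * ((c/4 - \<tau>) * ?n)"
      using cX0 L2 by simp
    then have "\<zeta> * real (card X) * real (card Y) < real (card X) * ((c/4 - \<tau>) * ?n)"
      by (simp add: mult_ac)
    then show ?thesis using L1 by linarith
  next
    case False
    have "0 < c * ?n / 4" using z(3) n0 by simp
    then have XB0: "0 < real (card (X \<inter> B))" using False by linarith
    have "real (card (X \<inter> B)) * ((c/2 - \<tau>) * ?n) \<le> real (e E X Y)"
      using sum_ge_subset_const[OF fX Int_lower1, where g="\<lambda>x. real (deg E Y x)" and c="(c/2 - \<tau>) * ?n" and B1=B] dXB S by auto
    moreover have cXs: "real (card X) \<le> 2 * real (card (X \<inter> B))"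
    proof -
      have "card X = card (X \<inter> A) + card (X \<inter> B)"
      proof -
        have "X \<subseteq> A \<union> B" using XY(1) by blast
        then have "card (A \<inter> X) + card (B \<inter> X) = card X" using card_split[OF fX, of A B] AB by blast
        then show ?thesis by (simp add: Int_commute[of X A] Int_commute[of X B])
      qed
      moreover have "\<tau> * ?n \<le> c * ?n / 4" using z(6) n0 by (simp add: mult_right_mono)
      ultimately show ?thesis using sXn False by linarith
    qed
    moreover have "\<zeta> * real (card X) * real (card Y) \<le> \<zeta> * (2 * real (card (X \<inter> B))) * ?n"
      using z(1) cXs cY by (intro mult_mono mult_left_mono) auto
    moreover have "\<zeta> * (2 * real (card (X \<inter> B))) * ?n < real (card (X \<inter> B)) * ((c/2 - \<tau>) * ?n)"
    proof -
      have "2 * \<zeta> * ?n < (c/2 - \<tau>) * ?n" using z(5) n0 by simp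
      then have "real (card (X \<inter> B)) * (2 * \<zeta> * ?n) < real (card (X \<inter> B)) * ((c/2 - \<tau>) * ?n)"
        using XB0 by simp
      then show ?thesis by (simp add: algebra_simps)
    qed
    ultimately show ?thesis by linarith
  qed
qed


lemma bip_half:
  assumes g: "graph V E" and AV: "A \<subseteq> V" and BV: "B \<subseteq> V" and AB: "A \<inter> B = {}"
    and XY: "X \<union> Y = A \<union> B" "X \<inter> Y = {}"
    and bip: "bip_robust_expander E A B \<nu> \<tau>"
    and s1: "\<tau> * real (card A) \<le> real (card (X \<inter> A))"
    and s2: "real (card (X \<inter> A)) \<le> (1 - \<tau>) * real (card A)"
    and bad: "real (card {v\<in>A. \<nu> * real (card (A \<union> B)) \<le> real (deg E A v)}) < \<nu> * real (card (A \<union> B)) / 4"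
    and z: "\<zeta> < \<nu>^2 / 4" "0 \<le> \<zeta>" "0 < \<nu>" and M0: "0 < card (A \<union> B)"
    and le: "real (e E X Y) \<le> \<zeta> * real (card X) * real (card Y)"
  shows "real (card (X \<inter> A)) + \<nu> * real (card (A \<union> B)) / 2 \<le> real (card (X \<inter> B))"
proof -
  let ?M = "real (card (A \<union> B))"
  let ?S = "X \<inter> A"
  let ?R = "RN E (A \<union> B) \<nu> ?S"
  let ?Ab = "{v\<in>A. \<nu> * ?M \<le> real (deg E A v)}"
  have fV: "finite V" using g graph_fin by blast
  have fA: "finite A" and fB: "finite B" using fV AV BV finite_subset by auto
  have XW: "X \<subseteq> A \<union> B" "Y \<subseteq> A \<union> B" using XY(1) by blast+
  then have fX: "finite X" and fY: "finite Y" using fA fB finite_subset by blast+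
  have R: "real (card ?R) \<ge> real (card ?S) + \<nu> * ?M"
    using bip s1 s2 unfolding bip_robust_expander_def by blast
  have Rsub: "?R \<subseteq> (?Ab \<union> (?R \<inter> Y)) \<union> (X \<inter> B)"
  proof
    fix v assume v: "v \<in> ?R"
    then have vW: "v \<in> A \<union> B" and dv: "\<nu> * ?M \<le> real (deg E ?S v)" by (auto simp: RN_def)
    have "deg E ?S v \<le> deg E A v" by (rule deg_mono[OF g]) auto
    then show "v \<in> (?Ab \<union> (?R \<inter> Y)) \<union> (X \<inter> B)" using v vW dv XY by auto
  qed
  have fin1: "finite ?Ab" using fA by auto
  have "card ?R \<le> card ((?Ab \<union> (?R \<inter> Y)) \<union> (X \<inter> B))"
    by (rule card_mono[OF _ Rsub]) (use fin1 fY fX in auto)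
  also have "\<dots> \<le> card (?Ab \<union> (?R \<inter> Y)) + card (X \<inter> B)" by (rule card_Un_le)
  also have "\<dots> \<le> card ?Ab + card (?R \<inter> Y) + card (X \<inter> B)" using card_Un_le by simp
  finally have cR: "card ?R \<le> card ?Ab + card (?R \<inter> Y) + card (X \<inter> B)" .
  have RY: "real (card (?R \<inter> Y)) < \<nu> * ?M / 4"
  proof (rule ccontr)
    assume "\<not> ?thesis"
    then have c1: "\<nu> * ?M / 4 \<le> real (card (?R \<inter> Y))" by simp
    have "real (card (?R \<inter> Y)) * (\<nu> * ?M) \<le> (\<Sum>y\<in>Y. real (deg E X y))"
    proof (rule sum_ge_subset_const[OF fY])
      show "\<forall>y\<in>?R \<inter> Y. \<nu> * ?M \<le> real (deg E X y)"
      proof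
        fix y assume y: "y \<in> ?R \<inter> Y"
        have "deg E ?S y \<le> deg E X y" by (rule deg_mono[OF g]) auto
        then show "\<nu> * ?M \<le> real (deg E X y)" using y by (auto simp: RN_def)
      qed
    qed auto
    also have "\<dots> = real (e E X Y)"
      using e_disj[OF g fY, of X] XY(2) e_sym[OF g, of X Y] by (simp add: Int_commute)
    finally have e1: "real (card (?R \<inter> Y)) * (\<nu> * ?M) \<le> real (e E X Y)" .
    have "(\<nu> * ?M / 4) * (\<nu> * ?M) \<le> real (card (?R \<inter> Y)) * (\<nu> * ?M)"
      using c1 z(3) by (intro mult_right_mono) auto
    then have "(\<nu> * ?M / 4) * (\<nu> * ?M) \<le> real (e E X Y)" using e1 by linarith
    then have e2: "\<nu>^2 * ?M^2 / 4 \<le> real (e E X Y)" by (simp add: power2_eq_square mult_ac)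
    have cX: "card X \<le> card (A \<union> B)" and cY: "card Y \<le> card (A \<union> B)"
      using XW fA fB by (auto intro: card_mono)
    have "\<zeta> * real (card X) * real (card Y) \<le> \<zeta> * ?M * ?M"
      using z(2) cX cY by (intro mult_mono mult_left_mono) auto
    also have "\<dots> < \<nu>^2 * ?M^2 / 4" using z(1) M0 by (simp add: power2_eq_square)
    finally show False using e2 le by linarith
  qed
  show ?thesis using cR RY bad R by linarith
qed

lemma bad_small:
  fixes E :: "'a::linorder \<Rightarrow> 'a \<Rightarrow> bool"
  assumes g: "graph V E" and AV: "A \<subseteq> V"
    and eAA: "real (e E A A) \<le> \<rho> * real (card V)^2"
    and h: "8 * \<rho> * real (card V)^2 < \<nu>^2 * M^2" "0 < \<nu>" "0 < M"
  shows "real (card {v\<in>A. \<nu> * M \<le> real (deg E A v)}) < \<nu> * M / 4"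
proof -
  let ?Ab = "{v\<in>A. \<nu> * M \<le> real (deg E A v)}"
  have fA: "finite A" using g graph_fin AV finite_subset by blast
  have "real (card ?Ab) * (\<nu> * M) \<le> (\<Sum>x\<in>A. real (deg E A x))"
    by (rule sum_ge_subset_const[OF fA]) auto
  also have "\<dots> \<le> 2 * real (e E A A)" by (rule e_inner[OF g fA])
  finally have "real (card ?Ab) * (\<nu> * M) \<le> 2 * \<rho> * real (card V)^2" using eAA by linarith
  then have "real (card ?Ab) * (\<nu> * M) < (\<nu> * M / 4) * (\<nu> * M)" using h(1)
    by (simp add: power2_eq_square algebra_simps)
  then show ?thesis using h(2,3) by (simp add: mult_less_cancel_right)
qed


lemma no_cut_W:
  assumes g: "graph V E" and AV: "A \<subseteq> V" and BV: "B \<subseteq> V" and AB: "A \<inter> B = {}"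
    and mind: "\<forall>v\<in>A \<union> B. c * real (card V) \<le> real (deg E (A \<union> B) v)"
    and d5a: "\<forall>u\<in>A. deg E A u \<le> deg E B u" and d5b: "\<forall>v\<in>B. deg E B v \<le> deg E A v"
    and bip: "bip_robust_expander E A B \<nu> \<tau>"
    and bad: "real (card {v\<in>A. \<nu> * real (card (A \<union> B)) \<le> real (deg E A v)}) < \<nu> * real (card (A \<union> B)) / 4"
    and hbal: "real (card B) < real (card A) + \<nu> * real (card (A \<union> B))"
    and z: "\<zeta> < \<nu>^2 / 4" "0 \<le> \<zeta>" "0 < \<nu>" "0 \<le> \<tau>" "0 < c" "\<zeta> < c/4 - \<tau>"
      "2 * \<zeta> < c/2 - \<tau>" "\<tau> \<le> c/4"
    and M0: "0 < card (A \<union> B)"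
  shows "\<not> sparse_cut E \<zeta> (A \<union> B) X Y"
proof
  assume sc: "sparse_cut E \<zeta> (A \<union> B) X Y"
  then have XY: "X \<noteq> {}" "Y \<noteq> {}" "X \<union> Y = A \<union> B" "X \<inter> Y = {}"
    and le: "real (e E X Y) \<le> \<zeta> * real (card X) * real (card Y)"
    unfolding sparse_cut_def by auto
  have YX: "Y \<union> X = A \<union> B" "Y \<inter> X = {}" using XY by auto
  have le2: "real (e E Y X) \<le> \<zeta> * real (card Y) * real (card X)"
    using le e_sym[OF g, of X Y] by (simp add: mult_ac)
  have fV: "finite V" using g graph_fin by blast
  have fA: "finite A" and fB: "finite B" using fV AV BV finite_subset by auto
  have csA: "card (X \<inter> A) + card (Y \<inter> A) = card A" by (rule card_split[OF fA]) (use XY in auto)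
  have csB: "card (X \<inter> B) + card (Y \<inter> B) = card B" by (rule card_split[OF fB]) (use XY in auto)
  consider "real (card (X \<inter> A)) < \<tau> * real (card A)"
    | "real (card (X \<inter> A)) > (1 - \<tau>) * real (card A)"
    | "\<tau> * real (card A) \<le> real (card (X \<inter> A))" "real (card (X \<inter> A)) \<le> (1 - \<tau>) * real (card A)"
    by linarith
  then show False
  proof cases
    case 1
    show False using bip_small[OF g AV BV AB mind d5a d5b XY(3,4,1) 1 z(2,4,5,6,7,8)] le by linarith
  next
    case 2
    then have "real (card (Y \<inter> A)) < \<tau> * real (card A)" using csA by (simp add: algebra_simps)
    from bip_small[OF g AV BV AB mind d5a d5b YX XY(2) this z(2,4,5,6,7,8)]
    show False using le2 by linarith
  next
    case 3
    note h1 = bip_half[OF g AV BV AB XY(3,4) bip 3 bad z(1,2,3) M0 le]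
    have "\<tau> * real (card A) \<le> real (card (Y \<inter> A))" "real (card (Y \<inter> A)) \<le> (1 - \<tau>) * real (card A)"
      using 3 csA by (simp_all add: algebra_simps)
    note h2 = bip_half[OF g AV BV AB YX bip this bad z(1,2,3) M0 le2]
    show False using h1 h2 csA csB hbal by linarith
  qed
qed


lemma min_deg_parts:
  assumes g: "graph V E" and reg: "regular V E D" and fP: "finite P" and UP: "\<Union>P = V"
    and D4: "\<forall>X\<in>P. \<forall>X'\<in>P. \<forall>x\<in>X. deg E X x \<ge> deg E X' x"
    and cP: "real (card P) * real D \<le> 2 * real (card V)"
    and Da: "\<alpha> * real (card V) \<le> real D" and a0: "0 \<le> \<alpha>"
    and X: "X \<in> P" and v: "v \<in> X"
  shows "\<alpha>^2 / 2 * real (card V) \<le> real (deg E X v)"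
proof -
  let ?n = "real (card V)" and ?d = "real (deg E X v)"
  have vV: "v \<in> V" using UP X v by blast
  have fV: "finite V" using g graph_fin by blast
  have n0: "0 < ?n" using vV fV card_gt_0_iff by fastforce
  have "D = card {u\<in>V. E v u}" using reg vV unfolding regular_def deg_def by simp
  also have "{u\<in>V. E v u} = (\<Union>Y\<in>P. {u\<in>Y. E v u})" using UP by blast
  also have "card \<dots> \<le> (\<Sum>Y\<in>P. card {u\<in>Y. E v u})" by (rule card_UN_le[OF fP])
  also have "\<dots> = (\<Sum>Y\<in>P. deg E Y v)" by (simp add: deg_def)
  also have "\<dots> \<le> (\<Sum>Y\<in>P. deg E X v)" by (rule sum_mono) (use D4 X v in blast)
  also have "\<dots> = card P * deg E X v" by simp
  finally have "real D \<le> real (card P) * ?d" by (metis of_nat_le_iff of_nat_mult)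
  then have "real D * real D \<le> real (card P) * ?d * real D" by (intro mult_right_mono) auto
  also have "\<dots> = (real (card P) * real D) * ?d" by (simp add: mult_ac)
  also have "\<dots> \<le> (2 * ?n) * ?d" using cP by (intro mult_right_mono) auto
  finally have 1: "real D * real D \<le> 2 * ?n * ?d" .
  have "(\<alpha> * ?n) * (\<alpha> * ?n) \<le> real D * real D" using Da a0 n0 by (intro mult_mono) auto
  with 1 have "\<alpha>^2 * ?n * ?n \<le> 2 * ?n * ?d" by (simp add: power2_eq_square mult_ac)
  then have "(\<alpha>^2 / 2 * ?n) * ?n \<le> ?d * ?n" by (simp add: mult_ac)
  then show ?thesis using n0 by (simp add: mult_le_cancel_right)
qed


lemma nums:
  fixes \<nu> \<tau> \<alpha> \<zeta> \<gamma> \<rho> \<eta> :: real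
  assumes h: "0 < \<nu>" "\<nu> \<le> \<tau>" "\<tau> \<le> \<alpha>^2/100000" "0 < \<alpha>" "\<alpha> < 1"
    "0 < \<zeta>" "\<zeta> \<le> \<nu>^4/100" "0 < \<gamma>" "\<gamma> \<le> \<nu>^4/10000"
    "0 < \<rho>" "\<rho> \<le> \<nu>^4 * \<eta> / 100000" "0 < \<eta>" "\<eta> < 1"
  defines "c \<equiv> \<alpha>^2/2"
  shows "\<zeta> < \<nu>^2" "\<zeta> < c - \<tau>" "\<tau> \<le> 1/2" "\<tau> \<le> c" "\<zeta> < \<nu>^2/4" "\<zeta> < c/4 - \<tau>"
    "2 * \<zeta> < c/2 - \<tau>" "\<tau> \<le> c/4" "0 < c" "0 \<le> \<tau>"
    "\<gamma> < \<nu>^2 * c^2 / 2" "\<gamma> < c * (c - \<tau>) / 4" "8 * \<rho> < \<nu>^2 * c^2" "\<rho> < \<nu> * c"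
    "\<rho> * (2 / \<alpha>) \<le> \<eta>" "\<tau> < \<alpha>^2/3" "\<alpha>^2/3 < \<alpha>" "\<alpha>^2/3 \<le> c"
proof -
  let ?a = "\<alpha>^2"
  have a0: "0 < ?a" using h by simp
  have a1: "?a \<le> \<alpha>" using h by (simp add: power2_eq_square mult_left_le_one_le less_imp_le)
  have a2: "?a < 1" using a1 h by linarith
  have nu: "\<nu> \<le> ?a / 100000" using h by linarith
  have nu1: "\<nu> < 1" using nu a2 by linarith
  have n2: "\<nu>^2 \<le> \<nu>" using h nu1 by (simp add: power2_eq_square mult_left_le_one_le less_imp_le)
  have n4: "\<nu>^4 \<le> \<nu>^2" using h nu1
    by (metis (mono_tags) less_imp_le mult_left_le_one_le numeral_Bit0 power_add power_le_one zero_le_power power2_eq_square)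
  have n4': "\<nu>^4 = \<nu>^2 * \<nu>^2" by (simp flip: power_add)
  have n2a: "\<nu>^2 \<le> ?a^2" using h nu a0 by (intro power_mono) auto
  have n2a': "\<nu>^2 \<le> ?a" using n2 nu a0 by linarith
  have z1: "\<zeta> \<le> \<nu>^2/100" using h n4 by linarith
  have z2: "\<zeta> \<le> ?a / 10000000" using z1 n2 nu by linarith
  have nz: "0 < \<nu>^2" using h by simp
  show "\<zeta> < \<nu>^2" "\<zeta> < \<nu>^2/4" using z1 nz by linarith+
  show "\<zeta> < c - \<tau>" "\<tau> \<le> 1/2" "\<tau> \<le> c" "\<zeta> < c/4 - \<tau>" "2 * \<zeta> < c/2 - \<tau>" "\<tau> \<le> c/4" "0 < c"
    "0 \<le> \<tau>" "\<tau> < \<alpha>^2/3" "\<alpha>^2/3 \<le> c"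
    using z2 h a0 a2 unfolding c_def by linarith+
  show "\<alpha>^2/3 < \<alpha>" using a1 h by linarith
  have g1: "\<gamma> \<le> \<nu>^2 * ?a^2 / 10000"
  proof -
    have "\<nu>^2 * \<nu>^2 \<le> \<nu>^2 * ?a^2" using n2a nz by (intro mult_left_mono) auto
    then show ?thesis using h(9) n4' by linarith
  qed
  have pa: "0 < \<nu>^2 * ?a^2" using nz a0 by simp
  show "\<gamma> < \<nu>^2 * c^2 / 2" using g1 pa unfolding c_def by (simp add: power_divide)
  have g2: "\<gamma> \<le> ?a^2 / 10000"
  proof -
    have "\<nu>^2 * ?a^2 \<le> 1 * ?a^2" using nz nu1 n2 by (intro mult_right_mono) auto
    then show ?thesis using g1 by linarith
  qed
  have "c * (c - \<tau>) \<ge> c * (c / 2)" using h a0 unfolding c_def by (intro mult_left_mono) auto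
  moreover have "c * (c / 2) = ?a^2 / 8" unfolding c_def by (simp add: power2_eq_square)
  moreover have "0 < ?a^2" using a0 by simp
  ultimately show "\<gamma> < c * (c - \<tau>) / 4" using g2 by linarith
  have r1: "\<rho> \<le> \<nu>^4 / 100000"
  proof -
    have "\<nu>^4 * \<eta> \<le> \<nu>^4 * 1" using h by (intro mult_left_mono) auto
    then show ?thesis using h by linarith
  qed
  have r2: "\<rho> \<le> \<nu>^2 * ?a^2 / 100000"
  proof -
    have "\<nu>^2 * \<nu>^2 \<le> \<nu>^2 * ?a^2" using n2a nz by (intro mult_left_mono) auto
    then show ?thesis using r1 n4' by linarith
  qed
  show "8 * \<rho> < \<nu>^2 * c^2" using r2 pa unfolding c_def by (simp add: power_divide)
  have "\<nu>^2 * ?a^2 \<le> \<nu> * ?a^2" using n2 a0 by (intro mult_right_mono) auto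
  moreover have "\<nu> * ?a^2 \<le> \<nu> * ?a" using h a0 a2
    by (intro mult_left_mono) (auto simp: power2_eq_square mult_left_le_one_le)
  moreover have "0 < \<nu> * ?a" using h a0 by simp
  ultimately show "\<rho> < \<nu> * c" using r2 unfolding c_def by linarith
  have r3: "\<rho> \<le> \<nu> * \<eta> / 100000"
  proof -
    have "\<nu>^4 \<le> \<nu>" using n4 n2 by linarith
    then have "\<nu>^4 * \<eta> \<le> \<nu> * \<eta>" using h by (intro mult_right_mono) auto
    then show ?thesis using h by linarith
  qed
  have "\<nu> * \<eta> \<le> \<alpha> * \<eta>" using nu a1 h by (intro mult_right_mono) auto
  then have "\<rho> \<le> \<alpha> * \<eta> / 100000" using r3 by linarith
  then have "\<rho> * (2 / \<alpha>) \<le> (\<alpha> * \<eta> / 100000) * (2 / \<alpha>)" using h by (intro mult_right_mono) auto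
  also have "\<dots> = \<eta> * 2 / 100000" using h by (simp add: field_simps)
  also have "\<dots> \<le> \<eta>" using h by simp
  finally show "\<rho> * (2 / \<alpha>) \<le> \<eta>" .
qed


lemma help1: fixes n c N \<gamma> \<nu> :: real
  assumes "0 < n" "0 \<le> c" "c * n \<le> N" "\<gamma> < \<nu>^2 * c^2 / 2"
  shows "\<gamma> * n^2 < \<nu>^2 * N^2 / 2"
proof -
  have "(c * n)^2 \<le> N^2" using assms by (intro power_mono) auto
  then have "\<nu>^2 * (c * n)^2 \<le> \<nu>^2 * N^2" by (intro mult_left_mono) auto
  moreover have "\<gamma> * n^2 < (\<nu>^2 * c^2 / 2) * n^2" using assms by (intro mult_strict_right_mono) auto
  ultimately show ?thesis by (simp add: power_mult_distrib mult_ac)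
qed

lemma help2: fixes n c N \<gamma> \<tau> :: real
  assumes "0 < n" "0 \<le> c - \<tau>" "c * n \<le> N" "\<gamma> < c * (c - \<tau>) / 4"
  shows "\<gamma> * n^2 < N * (c - \<tau>) * n / 4"
proof -
  have "(c * n) * ((c - \<tau>) * n) \<le> N * ((c - \<tau>) * n)" using assms by (intro mult_right_mono) auto
  moreover have "\<gamma> * n^2 < (c * (c - \<tau>) / 4) * n^2" using assms by (intro mult_strict_right_mono) auto
  ultimately show ?thesis by (simp add: power2_eq_square mult_ac)
qed

lemma help3: fixes n c M \<rho> \<nu> :: real
  assumes "0 < n" "0 \<le> c" "c * n \<le> M" "8 * \<rho> < \<nu>^2 * c^2"
  shows "8 * \<rho> * n^2 < \<nu>^2 * M^2"
proof -
  have "(c * n)^2 \<le> M^2" using assms by (intro power_mono) auto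
  then have "\<nu>^2 * (c * n)^2 \<le> \<nu>^2 * M^2" by (intro mult_left_mono) auto
  moreover have "(8 * \<rho>) * n^2 < (\<nu>^2 * c^2) * n^2" using assms by (intro mult_strict_right_mono) auto
  ultimately show ?thesis by (simp add: power_mult_distrib mult_ac)
qed

lemma help4: fixes n c M \<rho> \<nu> :: real
  assumes "0 < n" "0 \<le> \<nu>" "c * n \<le> M" "\<rho> < \<nu> * c"
  shows "\<rho> * n < \<nu> * M"
proof -
  have "\<nu> * (c * n) \<le> \<nu> * M" using assms by (intro mult_left_mono) auto
  moreover have "\<rho> * n < (\<nu> * c) * n" using assms by (intro mult_strict_right_mono) auto
  ultimately show ?thesis by (simp add: mult_ac)
qed


lemma graph_main:
  fixes V :: "nat set" and E :: "nat \<Rightarrow> nat \<Rightarrow> bool"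
  assumes g: "graph V E" and reg: "regular V E D" and Da: "\<alpha> * real (card V) \<le> real D"
    and n0: "0 < card V"
    and rp: "robust_partition V E D \<rho> \<nu> \<tau> k l Vs As Bs"
    and a: "0 < \<alpha>" "\<alpha> < 1" "\<tau> \<le> \<alpha>^2/100000"
    and zb: "0 < \<zeta>" "\<zeta> \<le> \<nu>^4/100" and gb: "0 < \<gamma>" "\<gamma> \<le> \<nu>^4/10000"
    and rb: "\<rho> \<le> \<nu>^4 * \<eta> / 100000" "\<rho> \<le> \<beta>" "0 < \<eta>" "\<eta> < 1"
  shows "clustering V E \<zeta> (\<alpha>^2/3) \<gamma> \<beta> \<eta> (parts Vs As Bs k l) \<and>
         (\<forall>j<l. almost_bip_wit V E \<beta> (As j \<union> Bs j) (As j) (Bs j)) \<and>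
         (\<forall>i<k. far_from_bipartite V E \<gamma> (Vs i))"
proof -
  let ?n = "real (card V)"
  define P where "P = parts Vs As Bs k l"
  define c where "c = \<alpha>^2/2"
  note R = rp[unfolded robust_partition_def Let_def, folded P_def]
  have r0a: "0 < \<rho>" using R by (elim conjE) assumption
  have r0b: "\<rho> \<le> \<nu>" using R by (elim conjE) assumption
  have r0c: "\<nu> \<le> \<tau>" using R by (elim conjE) assumption
  have r0d: "\<tau> < 1" using R by (elim conjE) assumption
  note r0 = r0a r0b r0c r0d
  have D1: "\<Union>P = V" using R by (elim conjE) assumption
  have dV: "\<forall>i<k. \<forall>i'<k. i \<noteq> i' \<longrightarrow> Vs i \<inter> Vs i' = {}" using R by (elim conjE) assumption
  have dW: "\<forall>j<l. \<forall>j'<l. j \<noteq> j' \<longrightarrow> (As j \<union> Bs j) \<inter> (As j' \<union> Bs j') = {}" using R by (elim conjE) assumption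
  have dVW: "\<forall>i<k. \<forall>j<l. Vs i \<inter> (As j \<union> Bs j) = {}" using R by (elim conjE) assumption
  have dAB: "\<forall>j<l. As j \<inter> Bs j = {}" using R by (elim conjE) assumption
  have D2: "\<forall>i<k. real (card (Vs i)) \<ge> sqrt \<rho> * ?n \<and> real (e E (Vs i) (V - Vs i)) \<le> \<rho> * ?n\<^sup>2 \<and>
        robust_expander E (Vs i) \<nu> \<tau>" using R by (elim conjE) assumption
  have D3: "\<forall>j<l. real (card (As j)) \<ge> sqrt \<rho> * ?n \<and> real (card (Bs j)) \<ge> sqrt \<rho> * ?n \<and>
        \<bar>real (card (As j)) - real (card (Bs j))\<bar> \<le> \<rho> * ?n \<and>
        real (e E (As j) (V - Bs j) + e E (Bs j) (V - As j)) \<le> \<rho> * ?n\<^sup>2 \<and>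
        bip_robust_expander E (As j) (Bs j) \<nu> \<tau>" using R by (elim conjE) assumption
  have D4: "\<forall>X\<in>P. \<forall>X'\<in>P. \<forall>x\<in>X. deg E X x \<ge> deg E X' x" using R by (elim conjE) assumption
  have D5: "\<forall>j<l. (\<forall>u\<in>As j. deg E (Bs j) u \<ge> deg E (As j) u) \<and>
            (\<forall>v\<in>Bs j. deg E (As j) v \<ge> deg E (Bs j) v)" using R by (elim conjE) assumption
  have D6: "real (k + 2 * l) \<le> of_int \<lfloor>(1 + root 3 \<rho>) * ?n / real D\<rfloor>" using R by (elim conjE) assumption
  note N = nums[OF r0(1)[THEN order.strict_trans2, OF r0(2)] r0(3) a(3) a(1,2) zb gb r0(1) rb(1,3,4),
      folded c_def]

  have Pdef: "P = Vs ` {..<k} \<union> (\<lambda>j. As j \<union> Bs j) ` {..<l}" by (simp add: P_def parts_def)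
  have fP: "finite P" using Pdef by simp
  have cP1: "card P \<le> k + l"
  proof -
    have "card P \<le> card (Vs ` {..<k}) + card ((\<lambda>j. As j \<union> Bs j) ` {..<l})"
      unfolding Pdef by (rule card_Un_le)
    also have "\<dots> \<le> k + l"
      using card_image_le[of "{..<k}" Vs] card_image_le[of "{..<l}" "\<lambda>j. As j \<union> Bs j"] by simp
    finally show ?thesis .
  qed
  have nr: "0 < ?n" using n0 by simp
  have "0 < \<alpha> * ?n" using a(1) nr by simp
  then have D0: "0 < real D" using Da by linarith
  have rt: "root 3 \<rho> \<le> 1"
  proof -
    have "\<rho> \<le> 1" using r0 by linarith
    then show ?thesis using real_root_le_mono[of 3 \<rho> 1] by simp
  qed
  have kl: "real (k + 2*l) * real D \<le> 2 * ?n"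
  proof -
    have "real (k + 2*l) \<le> (1 + root 3 \<rho>) * ?n / real D"
      using D6 of_int_floor_le[of "(1 + root 3 \<rho>) * ?n / real D"] by linarith
    also have "\<dots> \<le> 2 * ?n / real D" using rt nr D0 by (intro divide_right_mono mult_right_mono) auto
    finally show ?thesis using D0 by (simp add: field_simps)
  qed
  have cP: "real (card P) * real D \<le> 2 * ?n"
  proof -
    have "real (card P) \<le> real (k + 2*l)" using cP1 by simp
    also have "\<dots> \<le> (1 + root 3 \<rho>) * ?n / real D"
      using D6 of_int_floor_le[of "(1 + root 3 \<rho>) * ?n / real D"] by linarith
    also have "\<dots> \<le> 2 * ?n / real D" using rt nr D0 by (intro divide_right_mono mult_right_mono) auto
    finally show ?thesis using D0 by (simp add: field_simps)
  qed
  have mind: "\<forall>X\<in>P. \<forall>v\<in>X. c * ?n \<le> real (deg E X v)"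
    using min_deg_parts[OF g reg fP D1 D4 cP Da] a(1) unfolding c_def by auto
  have fV: "finite V" using g graph_fin by blast
  have subV: "X \<subseteq> V" if "X \<in> P" for X using D1 that by blast
  have VsP: "Vs i \<in> P" if "i<k" for i unfolding Pdef using that by auto
  have WP: "As j \<union> Bs j \<in> P" if "j<l" for j unfolding Pdef using that by auto
  have sq: "0 < sqrt \<rho> * ?n" using r0 nr by simp
  have Vne: "Vs i \<noteq> {}" if "i<k" for i
  proof -
    have "sqrt \<rho> * ?n \<le> real (card (Vs i))" using D2 that by blast
    then have "0 < real (card (Vs i))" using sq by linarith
    then show ?thesis by auto
  qed
  have Ane: "As j \<noteq> {}" if "j<l" for j
  proof -
    have "sqrt \<rho> * ?n \<le> real (card (As j))" using D3 that by blast
    then have "0 < real (card (As j))" using sq by linarith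
    then show ?thesis by auto
  qed
  have bigX: "c * ?n \<le> real (card X)" if XP: "X \<in> P" and Xne: "X \<noteq> {}" for X
  proof -
    obtain v where v: "v \<in> X" using Xne by blast
    have "finite X" using subV[OF XP] fV finite_subset by blast
    then have "deg E X v \<le> card X" by (rule deg_le_card)
    moreover have "c * ?n \<le> real (deg E X v)" using mind XP v by blast
    ultimately show ?thesis by linarith
  qed

  have nu0: "0 < \<nu>" using r0 by linarith
  have ct: "0 \<le> c - \<tau>" using N(4) by linarith
  have c0: "0 \<le> c" using N(9) by linarith
  have Vprops: "\<not> (\<exists>X Y. sparse_cut E \<zeta> (Vs i) X Y) \<and> far_from_bipartite V E \<gamma> (Vs i)" if i: "i<k" for i
  proof -
    let ?U = "Vs i"
    have UP: "?U \<in> P" using VsP[OF i] .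
    have UV: "?U \<subseteq> V" using subV[OF UP] .
    have rob: "robust_expander E ?U \<nu> \<tau>" using D2 i by blast
    have mU: "\<forall>v\<in>?U. c * ?n \<le> real (deg E ?U v)" using mind UP by blast
    have NU: "c * ?n \<le> real (card ?U)" using bigX[OF UP Vne[OF i]] .
    have nc: "\<not> (\<exists>X Y. sparse_cut E \<zeta> ?U X Y)"
      using no_cut_U[OF g UV rob mU N(1) N(2) _ nu0 N(10)] zb by auto
    have far: "far_from_bipartite V E \<gamma> ?U"
      by (rule far_U[OF g UV Vne[OF i] rob mU help1[OF nr c0 NU N(11)] help2[OF nr ct NU N(12)]
            N(3) nu0 N(10) N(4)])
    show ?thesis using nc far by blast
  qed

  have Wprops: "\<not> (\<exists>X Y. sparse_cut E \<zeta> (As j \<union> Bs j) X Y) \<and>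
      almost_bip_wit V E \<beta> (As j \<union> Bs j) (As j) (Bs j)" if j: "j<l" for j
  proof -
    let ?A = "As j" and ?B = "Bs j"
    have WPj: "?A \<union> ?B \<in> P" using WP[OF j] .
    have AV: "?A \<subseteq> V" and BV: "?B \<subseteq> V" using subV[OF WPj] by auto
    have AB: "?A \<inter> ?B = {}" using dAB j by blast
    have mW: "\<forall>v\<in>?A \<union> ?B. c * ?n \<le> real (deg E (?A \<union> ?B) v)" using mind WPj by blast
    have d5a: "\<forall>u\<in>?A. deg E ?A u \<le> deg E ?B u" using D5 j by blast
    have d5b: "\<forall>v\<in>?B. deg E ?B v \<le> deg E ?A v" using D5 j by blast
    have bip: "bip_robust_expander E ?A ?B \<nu> \<tau>" using D3 j by blast
    have bal: "\<bar>real (card ?A) - real (card ?B)\<bar> \<le> \<rho> * ?n" using D3 j by blast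
    have eS: "real (e E ?A (V - ?B) + e E ?B (V - ?A)) \<le> \<rho> * ?n\<^sup>2" using D3 j by blast
    have MW: "c * ?n \<le> real (card (?A \<union> ?B))" using bigX[OF WPj] Ane[OF j] by blast
    have M0: "0 < card (?A \<union> ?B)"
    proof -
      have "finite (?A \<union> ?B)" using AV BV fV finite_subset by blast
      then show ?thesis using Ane[OF j] by (simp add: card_gt_0_iff)
    qed
    have eAA: "real (e E ?A ?A) \<le> \<rho> * ?n\<^sup>2"
    proof -
      have "edges_between E ?A ?A \<subseteq> edges_between E ?A (V - ?B)"
        using AV AB unfolding edges_between_def by blast
      then have "e E ?A ?A \<le> e E ?A (V - ?B)" unfolding e_def by (rule card_mono[OF edges_fin[OF g]])
      then show ?thesis using eS by linarith
    qed
    have Mr: "0 < real (card (?A \<union> ?B))" using M0 by simp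
    have bad: "real (card {v\<in>?A. \<nu> * real (card (?A \<union> ?B)) \<le> real (deg E ?A v)})
        < \<nu> * real (card (?A \<union> ?B)) / 4"
      by (rule bad_small[OF g AV eAA help3[OF nr c0 MW N(13)] nu0 Mr])
    have hbal: "real (card ?B) < real (card ?A) + \<nu> * real (card (?A \<union> ?B))"
      using bal help4[OF nr _ MW N(14)] nu0 by linarith
    have nc: "\<not> (\<exists>X Y. sparse_cut E \<zeta> (?A \<union> ?B) X Y)"
      using no_cut_W[OF g AV BV AB mW d5a d5b bip bad hbal N(5) _ nu0 N(10) _ N(6) N(7) N(8) M0]
        zb N(9) by auto
    have sub: "edges_between E (?A \<union> ?B) (?A \<union> ?B) - edges_between E ?A ?B
        \<subseteq> edges_between E ?A (V - ?B) \<union> edges_between E ?B (V - ?A)"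
    proof
      fix z assume z: "z \<in> edges_between E (?A \<union> ?B) (?A \<union> ?B) - edges_between E ?A ?B"
      then obtain x y where zxy: "z = {x,y}" "E x y" "x \<in> ?A \<union> ?B" "y \<in> ?A \<union> ?B"
        unfolding edges_between_def by blast
      have nz: "z \<notin> edges_between E ?A ?B" using z by blast
      have yV: "y \<in> V" "x \<in> V" using graph_E[OF g zxy(2)] by auto
      have Eyx: "E y x" using graph_E[OF g zxy(2)] by auto
      show "z \<in> edges_between E ?A (V - ?B) \<union> edges_between E ?B (V - ?A)"
      proof (cases "x \<in> ?A")
        case True
        then have "y \<notin> ?B" using nz zxy unfolding edges_between_def by blast
        then show ?thesis using True zxy yV unfolding edges_between_def by blast
      next
        case False
        then have xB: "x \<in> ?B" using zxy by blast
        have "y \<notin> ?A"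
        proof
          assume "y \<in> ?A"
          then have "{y,x} \<in> edges_between E ?A ?B" using xB Eyx unfolding edges_between_def by blast
          then show False using nz zxy by (simp add: insert_commute)
        qed
        then show ?thesis using xB zxy yV unfolding edges_between_def by blast
      qed
    qed
    have "card (edges_between E (?A \<union> ?B) (?A \<union> ?B) - edges_between E ?A ?B)
        \<le> card (edges_between E ?A (V - ?B) \<union> edges_between E ?B (V - ?A))"
      by (rule card_mono[OF _ sub]) (simp add: edges_fin[OF g])
    also have "\<dots> \<le> e E ?A (V - ?B) + e E ?B (V - ?A)" unfolding e_def by (rule card_Un_le)
    finally have "real (card (edges_between E (?A \<union> ?B) (?A \<union> ?B) - edges_between E ?A ?B))
        \<le> \<rho> * ?n\<^sup>2" using eS by linarith
    moreover have "\<rho> * ?n\<^sup>2 \<le> \<beta> * ?n\<^sup>2" using rb(2) by (intro mult_right_mono) auto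
    ultimately have wit: "almost_bip_wit V E \<beta> (?A \<union> ?B) ?A ?B"
      unfolding almost_bip_wit_def using AB by auto
    show ?thesis using nc wit by blast
  qed

  define C where "C = {{x, y} | x y. E x y \<and> (\<exists>X\<in>P. x \<in> X \<and> y \<notin> X)}"
  define F1 where "F1 = (\<Union>i\<in>{..<k}. edges_between E (Vs i) (V - Vs i))"
  define F2 where "F2 = (\<Union>j\<in>{..<l}. edges_between E (As j) (V - Bs j) \<union> edges_between E (Bs j) (V - As j))"
  have CF: "C \<subseteq> F1 \<union> F2"
  proof
    fix z assume "z \<in> C"
    then obtain x y X where z: "z = {x,y}" "E x y" "X \<in> P" "x \<in> X" "y \<notin> X"
      unfolding C_def by blast
    have yV: "y \<in> V" using graph_E[OF g z(2)] by auto
    from z(3) consider i where "i<k" "X = Vs i" | j where "j<l" "X = As j \<union> Bs j"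
      unfolding Pdef by blast
    then show "z \<in> F1 \<union> F2"
    proof cases
      case 1
      then show ?thesis using z yV unfolding F1_def edges_between_def by blast
    next
      case 2
      then show ?thesis using z yV unfolding F2_def edges_between_def by blast
    qed
  qed
  have fF1: "finite F1" unfolding F1_def using edges_fin[OF g] by blast
  have fF2: "finite F2" unfolding F2_def using edges_fin[OF g] by blast
  have cF1: "real (card F1) \<le> real k * (\<rho> * ?n\<^sup>2)"
  proof -
    have "card F1 \<le> (\<Sum>i\<in>{..<k}. card (edges_between E (Vs i) (V - Vs i)))"
      unfolding F1_def by (rule card_UN_le) simp
    then have "real (card F1) \<le> (\<Sum>i\<in>{..<k}. real (e E (Vs i) (V - Vs i)))"
      unfolding e_def by (metis of_nat_le_iff of_nat_sum)
    also have "\<dots> \<le> (\<Sum>i\<in>{..<k}. \<rho> * ?n\<^sup>2)" by (rule sum_mono) (use D2 in auto)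
    finally show ?thesis by simp
  qed
  have cF2: "real (card F2) \<le> real l * (\<rho> * ?n\<^sup>2)"
  proof -
    have "card F2 \<le> (\<Sum>j\<in>{..<l}. card (edges_between E (As j) (V - Bs j) \<union> edges_between E (Bs j) (V - As j)))"
      unfolding F2_def by (rule card_UN_le) simp
    also have "\<dots> \<le> (\<Sum>j\<in>{..<l}. e E (As j) (V - Bs j) + e E (Bs j) (V - As j))"
      unfolding e_def by (rule sum_mono) (rule card_Un_le)
    finally have "real (card F2) \<le> (\<Sum>j\<in>{..<l}. real (e E (As j) (V - Bs j) + e E (Bs j) (V - As j)))"
      by (metis of_nat_le_iff of_nat_sum)
    also have "\<dots> \<le> (\<Sum>j\<in>{..<l}. \<rho> * ?n\<^sup>2)" by (rule sum_mono) (use D3 in auto)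
    finally show ?thesis by simp
  qed
  have cC: "real (card C) \<le> \<eta> * ?n\<^sup>2"
  proof -
    have "card C \<le> card (F1 \<union> F2)" by (rule card_mono[OF _ CF]) (use fF1 fF2 in simp)
    also have "\<dots> \<le> card F1 + card F2" by (rule card_Un_le)
    finally have "real (card C) \<le> (real k + real l) * (\<rho> * ?n\<^sup>2)"
      using cF1 cF2 by (simp add: algebra_simps)
    also have "\<dots> \<le> (2 / \<alpha>) * (\<rho> * ?n\<^sup>2)"
    proof (rule mult_right_mono)
      have "(real k + real l) * real D \<le> real (k + 2*l) * real D" by (intro mult_right_mono) auto
      then have "(real k + real l) * real D \<le> 2 * ?n" using kl by linarith
      moreover have "(real k + real l) * (\<alpha> * ?n) \<le> (real k + real l) * real D" using Da by (intro mult_left_mono) auto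
      ultimately have "(real k + real l) * \<alpha> * ?n \<le> 2 * ?n" by (simp add: mult_ac)
      then have "(real k + real l) * \<alpha> \<le> 2" using nr by (simp add: mult_le_cancel_right)
      then show "real k + real l \<le> 2 / \<alpha>" using a(1) by (simp add: field_simps)
    qed (use r0 in simp)
    also have "\<dots> = (\<rho> * (2 / \<alpha>)) * ?n\<^sup>2" by simp
    also have "\<dots> \<le> \<eta> * ?n\<^sup>2" using N(15) by (intro mult_right_mono) auto
    finally show ?thesis .
  qed

  have Pcases: "(\<exists>i<k. X = Vs i) \<or> (\<exists>j<l. X = As j \<union> Bs j)" if "X \<in> P" for X
    using that unfolding Pdef by blast
  have ne: "{} \<notin> P"
  proof
    assume "{} \<in> P"
    from Pcases[OF this] show False using Vne Ane by blast
  qed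
  have disj: "\<forall>X\<in>P. \<forall>Y\<in>P. X \<noteq> Y \<longrightarrow> X \<inter> Y = {}"
  proof (intro ballI impI)
    fix X Y assume X: "X \<in> P" and Y: "Y \<in> P" and XY: "X \<noteq> Y"
    from Pcases[OF X] Pcases[OF Y] show "X \<inter> Y = {}"
    proof (elim disjE exE conjE)
      fix i i' assume "i<k" "X = Vs i" "i'<k" "Y = Vs i'"
      then show ?thesis using dV XY by blast
    next
      fix i j assume "i<k" "X = Vs i" "j<l" "Y = As j \<union> Bs j"
      then show ?thesis using dVW by blast
    next
      fix i j assume "j<l" "X = As j \<union> Bs j" "i<k" "Y = Vs i"
      then show ?thesis using dVW by blast
    next
      fix j j' assume "j<l" "X = As j \<union> Bs j" "j'<l" "Y = As j' \<union> Bs j'"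
      then show ?thesis using dW XY by blast
    qed
  qed
  have degd: "\<forall>A\<in>P. \<forall>v\<in>A. \<alpha>^2/3 * ?n \<le> real (deg E A v)"
  proof (intro ballI)
    fix A v assume "A \<in> P" "v \<in> A"
    then have "c * ?n \<le> real (deg E A v)" using mind by blast
    moreover have "\<alpha>^2/3 * ?n \<le> c * ?n" using N(18) nr by (intro mult_right_mono) auto
    ultimately show "\<alpha>^2/3 * ?n \<le> real (deg E A v)" by linarith
  qed
  have nocut: "\<forall>A\<in>P. \<not> (\<exists>X Y. sparse_cut E \<zeta> A X Y)"
    using Pcases Vprops Wprops by blast
  have bf: "\<forall>A\<in>P. almost_bipartite V E \<beta> A \<or> far_from_bipartite V E \<gamma> A"
  proof
    fix A assume "A \<in> P"
    from Pcases[OF this] show "almost_bipartite V E \<beta> A \<or> far_from_bipartite V E \<gamma> A"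
      using Vprops Wprops unfolding almost_bipartite_def by blast
  qed
  have cl: "clustering V E \<zeta> (\<alpha>^2/3) \<gamma> \<beta> \<eta> P"
    unfolding clustering_def Let_def using D1 ne disj cC degd nocut bf unfolding C_def by blast
  show ?thesis using cl Vprops Wprops unfolding P_def by blast
qed


definition phi :: "(real \<Rightarrow> real) \<Rightarrow> real \<Rightarrow> real" where
  "phi f x = x * f x / 100"

definition Zf :: "(real \<Rightarrow> real) \<Rightarrow> real \<Rightarrow> real" where
  "Zf f x = x^3 * phi f x"

definition Hf :: "(real \<Rightarrow> real) \<Rightarrow> real \<Rightarrow> real" where
  "Hf f x = phi f (phi f (phi f (Zf f x)))"

definition fp :: "(real \<Rightarrow> real) \<Rightarrow> real \<Rightarrow> real" where
  "fp f x = x^4 * phi f (Hf f x) / 1000"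

locale fassm =
  fixes f :: "real \<Rightarrow> real"
  assumes fr: "\<forall>x\<in>{0<..<1}. f x \<in> {0<..<1}"
    and fm: "mono_on {0<..<1} f"
begin

lemma phi_basic:
  assumes "0 < x" "x < 1"
  shows "0 < phi f x" "phi f x \<le> x / 100" "phi f x < f x" "phi f x < 1" "f x < 1" "0 < f x"
proof -
  have f: "0 < f x" "f x < 1" using fr assms by auto
  show "0 < phi f x" using f assms by (simp add: phi_def)
  have "x * f x \<le> x * 1" using f assms by (intro mult_left_mono) auto
  then show "phi f x \<le> x / 100" by (simp add: phi_def)
  have "x * f x < 1 * f x" using f assms by (intro mult_strict_right_mono) auto
  then show "phi f x < f x" using f by (simp add: phi_def)
  then show "phi f x < 1" using f by linarith
  show "f x < 1" "0 < f x" using f by auto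
qed

lemma phi_mono:
  assumes "0 < x" "x \<le> y" "y < 1"
  shows "phi f x \<le> phi f y"
proof -
  have "f x \<le> f y" using fm assms by (auto intro: mono_onD)
  moreover have "0 < f x" using fr assms by auto
  ultimately have "x * f x \<le> y * f y" using assms by (intro mult_mono) auto
  then show ?thesis by (simp add: phi_def)
qed

lemma Z_basic:
  assumes "0 < x" "x < 1"
  shows "0 < Zf f x" "Zf f x \<le> x^4 / 100" "Zf f x \<le> phi f x" "Zf f x < 1" "Zf f x \<le> x"
proof -
  note p = phi_basic[OF assms]
  have x3: "0 < x^3" "x^3 \<le> 1" using assms by (auto simp: power_le_one)
  show "0 < Zf f x" using p x3 by (simp add: Zf_def)
  have "x^3 * phi f x \<le> x^3 * (x / 100)" using p x3 by (intro mult_left_mono) auto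
  also have "\<dots> = x^4 / 100" by (simp add: power_numeral_reduce)
  finally show "Zf f x \<le> x^4 / 100" by (simp add: Zf_def)
  have "x^3 * phi f x \<le> 1 * phi f x" using p x3 by (intro mult_right_mono) auto
  then show "Zf f x \<le> phi f x" by (simp add: Zf_def)
  then show "Zf f x < 1" "Zf f x \<le> x" using p assms by linarith+
qed

lemma Z_mono:
  assumes "0 < x" "x \<le> y" "y < 1"
  shows "Zf f x \<le> Zf f y"
proof -
  have "x^3 \<le> y^3" using assms by (intro power_mono) auto
  moreover have "phi f x \<le> phi f y" by (rule phi_mono[OF assms])
  moreover have "0 < phi f x" using phi_basic assms by auto
  ultimately show ?thesis unfolding Zf_def using assms by (intro mult_mono) auto
qed

lemma phi_in: "0 < x \<Longrightarrow> x < 1 \<Longrightarrow> 0 < phi f x \<and> phi f x < 1"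
  using phi_basic by auto

lemma H_basic:
  assumes "0 < x" "x < 1"
  shows "0 < Hf f x" "Hf f x < 1" "Hf f x \<le> x"
proof -
  note z = Z_basic[OF assms]
  note p1 = phi_basic[OF z(1) z(4)]
  note p2 = phi_basic[OF p1(1) p1(4)]
  note p3 = phi_basic[OF p2(1) p2(4)]
  show "0 < Hf f x" "Hf f x < 1" using p3 by (auto simp: Hf_def)
  show "Hf f x \<le> x" using p3 p2 p1 z by (simp add: Hf_def)
qed

lemma H_mono:
  assumes "0 < x" "x \<le> y" "y < 1"
  shows "Hf f x \<le> Hf f y"
proof -
  have y0: "0 < y" using assms by linarith
  note zx = Z_basic[OF assms(1) order.strict_trans1[OF assms(2,3)]]
  note zy = Z_basic[OF y0 assms(3)]
  have m0: "Zf f x \<le> Zf f y" by (rule Z_mono[OF assms])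
  have m1: "phi f (Zf f x) \<le> phi f (Zf f y)" by (rule phi_mono[OF zx(1) m0 zy(4)])
  have a1: "0 < phi f (Zf f x)" "phi f (Zf f y) < 1" using phi_in zx zy by auto
  have m2: "phi f (phi f (Zf f x)) \<le> phi f (phi f (Zf f y))" by (rule phi_mono[OF a1(1) m1 a1(2)])
  have a2: "0 < phi f (phi f (Zf f x))" "phi f (phi f (Zf f y)) < 1"
    using phi_in a1 zx zy by (meson phi_in)+
  show ?thesis unfolding Hf_def by (rule phi_mono[OF a2(1) m2 a2(2)])
qed

end

lemma (in fassm) main_fassm:
  shows "\<exists>f' :: real \<Rightarrow> real.
    (\<forall>x\<in>{0<..<1}. f' x \<in> {0<..<1}) \<and> mono_on {0<..<1} f' \<and>
    (\<forall>x\<in>{0<..<1}. f' x < f x) \<and>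
    (\<forall>\<rho> \<nu> \<tau> \<alpha> (n::nat) (k::nat) (l::nat).
       \<rho> \<in> {0<..<1} \<and> \<nu> \<in> {0<..<1} \<and> \<tau> \<in> {0<..<1} \<and> \<alpha> \<in> {0<..<1} \<and>
       0 < n \<and> 1 / real n \<le> \<rho> \<and> \<rho> \<le> f' \<nu> \<and> \<nu> \<le> \<tau> \<and> \<tau> \<le> f' \<alpha> \<longrightarrow>
       (\<exists>\<zeta> \<delta> \<gamma> \<beta> \<eta>.
          \<zeta> \<in> {0<..<1} \<and> \<delta> \<in> {0<..<1} \<and> \<gamma> \<in> {0<..<1} \<and> \<beta> \<in> {0<..<1} \<and> \<eta> \<in> {0<..<1} \<and>
          \<rho> \<le> f \<eta> \<and> \<eta> \<le> f \<beta> \<and> \<beta> \<le> f \<gamma> \<and> \<gamma> \<le> f \<zeta> \<and> \<zeta> \<le> f \<nu> \<and>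
          \<tau> < \<delta> \<and> \<delta> < \<alpha> \<and>
          (\<forall>(V :: nat set) E (D::nat) Vs As Bs.
             graph V E \<and> card V = n \<and> regular V E D \<and> real D \<ge> \<alpha> * real n \<and>
             robust_partition V E D \<rho> \<nu> \<tau> k l Vs As Bs \<longrightarrow>
               clustering V E \<zeta> \<delta> \<gamma> \<beta> \<eta> (parts Vs As Bs k l) \<and>
               (\<forall>j<l. almost_bip_wit V E \<beta> (As j \<union> Bs j) (As j) (Bs j)) \<and>
               (\<forall>i<k. far_from_bipartite V E \<gamma> (Vs i)))))"
proof -
  let ?f' = "fp f"
  have fp_basic: "0 < fp f x" "fp f x \<le> x^4 * (phi f (Hf f x) / 1000)" "fp f x < phi f (Hf f x)"
    "phi f (Hf f x) \<le> Hf f x / 100" if "0 < x" "x < 1" for x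
  proof -
    note h = H_basic[OF that]
    note p = phi_basic[OF h(1) h(2)]
    have x4: "0 < x^4" "x^4 \<le> 1" using that by (auto simp: power_le_one)
    show "0 < fp f x" using x4 p by (simp add: fp_def)
    show "fp f x \<le> x^4 * (phi f (Hf f x) / 1000)" by (simp add: fp_def)
    have "x^4 * phi f (Hf f x) \<le> 1 * phi f (Hf f x)" using x4 p by (intro mult_right_mono) auto
    then show "fp f x < phi f (Hf f x)" using p by (simp add: fp_def)
    show "phi f (Hf f x) \<le> Hf f x / 100" using p by simp
  qed
  have P1: "\<forall>x\<in>{0<..<1}. ?f' x \<in> {0<..<1}"
  proof
    fix x :: real assume "x \<in> {0<..<1}"
    then have x: "0 < x" "x < 1" by auto
    note h = H_basic[OF x]
    note p = phi_basic[OF h(1) h(2)]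
    show "?f' x \<in> {0<..<1}" using fp_basic[OF x] p by auto
  qed
  have P2: "mono_on {0<..<1} ?f'"
  proof (rule mono_onI)
    fix x y :: real assume "x \<in> {0<..<1}" "y \<in> {0<..<1}" "x \<le> y"
    then have xy: "0 < x" "x \<le> y" "y < 1" by auto
    have y: "0 < y" "y < 1" using xy by auto
    note hx = H_basic[OF xy(1) order.strict_trans1[OF xy(2,3)]]
    note hy = H_basic[OF y]
    have "phi f (Hf f x) \<le> phi f (Hf f y)" by (rule phi_mono[OF hx(1) H_mono[OF xy] hy(2)])
    moreover have "x^4 \<le> y^4" using xy by (intro power_mono) auto
    moreover have "0 < phi f (Hf f x)" using phi_basic hx by auto
    ultimately show "?f' x \<le> ?f' y" unfolding fp_def using xy
      by (intro divide_right_mono mult_mono) auto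
  qed
  have P3: "\<forall>x\<in>{0<..<1}. ?f' x < f x"
  proof
    fix x :: real assume "x \<in> {0<..<1}"
    then have x: "0 < x" "x < 1" by auto
    note h = H_basic[OF x]
    note p = phi_basic[OF h(1) h(2)]
    have "f (Hf f x) \<le> f x" using fm h x by (auto intro: mono_onD)
    then show "?f' x < f x" using fp_basic[OF x] p by linarith
  qed
  have P4: "\<forall>\<rho> \<nu> \<tau> \<alpha> (n::nat) (k::nat) (l::nat).
       \<rho> \<in> {0<..<1} \<and> \<nu> \<in> {0<..<1} \<and> \<tau> \<in> {0<..<1} \<and> \<alpha> \<in> {0<..<1} \<and>
       0 < n \<and> 1 / real n \<le> \<rho> \<and> \<rho> \<le> ?f' \<nu> \<and> \<nu> \<le> \<tau> \<and> \<tau> \<le> ?f' \<alpha> \<longrightarrow>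
       (\<exists>\<zeta> \<delta> \<gamma> \<beta> \<eta>.
          \<zeta> \<in> {0<..<1} \<and> \<delta> \<in> {0<..<1} \<and> \<gamma> \<in> {0<..<1} \<and> \<beta> \<in> {0<..<1} \<and> \<eta> \<in> {0<..<1} \<and>
          \<rho> \<le> f \<eta> \<and> \<eta> \<le> f \<beta> \<and> \<beta> \<le> f \<gamma> \<and> \<gamma> \<le> f \<zeta> \<and> \<zeta> \<le> f \<nu> \<and>
          \<tau> < \<delta> \<and> \<delta> < \<alpha> \<and>
          (\<forall>(V :: nat set) E (D::nat) Vs As Bs.
             graph V E \<and> card V = n \<and> regular V E D \<and> real D \<ge> \<alpha> * real n \<and>
             robust_partition V E D \<rho> \<nu> \<tau> k l Vs As Bs \<longrightarrow>
               clustering V E \<zeta> \<delta> \<gamma> \<beta> \<eta> (parts Vs As Bs k l) \<and>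
               (\<forall>j<l. almost_bip_wit V E \<beta> (As j \<union> Bs j) (As j) (Bs j)) \<and>
               (\<forall>i<k. far_from_bipartite V E \<gamma> (Vs i))))"
  proof (intro allI impI)
    fix \<rho> \<nu> \<tau> \<alpha> :: real and n k l :: nat
    assume H: "\<rho> \<in> {0<..<1} \<and> \<nu> \<in> {0<..<1} \<and> \<tau> \<in> {0<..<1} \<and> \<alpha> \<in> {0<..<1} \<and>
       0 < n \<and> 1 / real n \<le> \<rho> \<and> \<rho> \<le> ?f' \<nu> \<and> \<nu> \<le> \<tau> \<and> \<tau> \<le> ?f' \<alpha>"
    then have nu: "0 < \<nu>" "\<nu> < 1" and al: "0 < \<alpha>" "\<alpha> < 1" and ta: "0 < \<tau>" "\<tau> < 1"
      and rh: "0 < \<rho>" "\<rho> < 1" and n0: "0 < n" and rf: "\<rho> \<le> ?f' \<nu>" and tf: "\<tau> \<le> ?f' \<alpha>"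
      by auto
    define \<zeta> where "\<zeta> = Zf f \<nu>"
    define \<gamma> where "\<gamma> = phi f \<zeta>"
    define \<beta> where "\<beta> = phi f \<gamma>"
    define \<eta> where "\<eta> = phi f \<beta>"
    define \<delta> where "\<delta> = \<alpha>^2/3"
    have Hn: "Hf f \<nu> = \<eta>" by (simp add: Hf_def \<eta>_def \<beta>_def \<gamma>_def \<zeta>_def)
    note z = Z_basic[OF nu, folded \<zeta>_def]
    note pn = phi_basic[OF nu]
    note pz = phi_basic[OF z(1) z(4), folded \<gamma>_def]
    note pg = phi_basic[OF pz(1) pz(4), folded \<beta>_def]
    note pb = phi_basic[OF pg(1) pg(4), folded \<eta>_def]
    note pe = phi_basic[OF pb(1) pb(4)]
    have x4: "0 < \<nu>^4" "\<nu>^4 \<le> 1" using nu by (auto simp: power_le_one)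
    have rf2: "\<rho> \<le> \<nu>^4 * (phi f \<eta> / 1000)" using rf fp_basic(2)[OF nu] Hn by simp
    have r1: "\<rho> \<le> \<nu>^4 * \<eta> / 100000"
    proof -
      have "\<nu>^4 * (phi f \<eta> / 1000) \<le> \<nu>^4 * (\<eta> / 100000)" using x4 pe by (intro mult_left_mono) auto
      then have "\<rho> \<le> \<nu>^4 * (\<eta> / 100000)" using rf2 by linarith
      then show ?thesis by simp
    qed
    have r2: "\<rho> \<le> \<eta>"
    proof -
      have "\<nu>^4 * \<eta> \<le> 1 * \<eta>" using x4 pb by (intro mult_right_mono) auto
      then have "\<nu>^4 * \<eta> \<le> \<eta>" by simp
      then have "\<nu>^4 * \<eta> / 100000 \<le> \<eta>" using pb by (simp add: divide_le_eq)
      then show ?thesis using r1 by linarith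
    qed
    have rfe: "\<rho> \<le> f \<eta>" using rf fp_basic(3)[OF nu, unfolded Hn] pe by linarith
    have ha: "phi f (Hf f \<alpha>) \<le> 1/100" using fp_basic(4)[OF al] H_basic[OF al] by linarith
    have a4: "\<alpha>^4 \<le> \<alpha>^2" using al by (intro power_decreasing) auto
    have "\<tau> \<le> \<alpha>^4 * (phi f (Hf f \<alpha>) / 1000)" using tf fp_basic(2)[OF al] by linarith
    also have "\<dots> \<le> \<alpha>^4 * (1/100000)" using ha al by (intro mult_left_mono) auto
    finally have t1: "\<tau> \<le> \<alpha>^2/100000" using a4 by linarith
    have a2: "\<alpha>^2 \<le> \<alpha>" using al by (simp add: power2_eq_square mult_left_le_one_le less_imp_le)
    have a20: "0 < \<alpha>^2" using al by simp
    have zb: "\<zeta> \<le> \<nu>^4/100" using z by simp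
    have gb: "\<gamma> \<le> \<nu>^4/10000" using pz zb by linarith
    have main: "clustering V E \<zeta> \<delta> \<gamma> \<beta> \<eta> (parts Vs As Bs k l) \<and>
               (\<forall>j<l. almost_bip_wit V E \<beta> (As j \<union> Bs j) (As j) (Bs j)) \<and>
               (\<forall>i<k. far_from_bipartite V E \<gamma> (Vs i))"
      if G: "graph V E \<and> card V = n \<and> regular V E D \<and> real D \<ge> \<alpha> * real n \<and>
             robust_partition V E D \<rho> \<nu> \<tau> k l Vs As Bs"
      for V :: "nat set" and E D Vs As Bs
    proof -
      have "0 < card V" using G n0 by simp
      then show ?thesis unfolding \<delta>_def
        using graph_main[of V E D \<alpha> \<rho> \<nu> \<tau> k l Vs As Bs \<zeta> \<gamma> \<eta> \<beta>] G al t1 z(1) zb pz(1) gb r1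
          pg pb r2 by auto
    qed
    show "\<exists>\<zeta> \<delta> \<gamma> \<beta> \<eta>.
          \<zeta> \<in> {0<..<1} \<and> \<delta> \<in> {0<..<1} \<and> \<gamma> \<in> {0<..<1} \<and> \<beta> \<in> {0<..<1} \<and> \<eta> \<in> {0<..<1} \<and>
          \<rho> \<le> f \<eta> \<and> \<eta> \<le> f \<beta> \<and> \<beta> \<le> f \<gamma> \<and> \<gamma> \<le> f \<zeta> \<and> \<zeta> \<le> f \<nu> \<and>
          \<tau> < \<delta> \<and> \<delta> < \<alpha> \<and>
          (\<forall>(V :: nat set) E (D::nat) Vs As Bs.
             graph V E \<and> card V = n \<and> regular V E D \<and> real D \<ge> \<alpha> * real n \<and>
             robust_partition V E D \<rho> \<nu> \<tau> k l Vs As Bs \<longrightarrow>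
               clustering V E \<zeta> \<delta> \<gamma> \<beta> \<eta> (parts Vs As Bs k l) \<and>
               (\<forall>j<l. almost_bip_wit V E \<beta> (As j \<union> Bs j) (As j) (Bs j)) \<and>
               (\<forall>i<k. far_from_bipartite V E \<gamma> (Vs i)))"
    proof (rule exI[of _ \<zeta>], rule exI[of _ \<delta>], rule exI[of _ \<gamma>], rule exI[of _ \<beta>],
        rule exI[of _ \<eta>], intro conjI allI impI)
      show "\<zeta> \<in> {0<..<1}" "\<gamma> \<in> {0<..<1}" "\<beta> \<in> {0<..<1}" "\<eta> \<in> {0<..<1}"
        using z pz pg pb by auto
      show "\<delta> \<in> {0<..<1}" using a2 a20 al unfolding \<delta>_def by auto
      show "\<rho> \<le> f \<eta>" by (rule rfe)
      show "\<eta> \<le> f \<beta>" "\<beta> \<le> f \<gamma>" "\<gamma> \<le> f \<zeta>" using pb pg pz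
        by (auto simp: \<eta>_def \<beta>_def \<gamma>_def)
      show "\<zeta> \<le> f \<nu>" using z pn by linarith
      show "\<tau> < \<delta>" using t1 a20 unfolding \<delta>_def by linarith
      show "\<delta> < \<alpha>" using a2 al unfolding \<delta>_def by linarith
    qed (use main in blast)+
  qed
  show ?thesis using P1 P2 P3 P4 by blast
qed


theorem mainTheorem17:
  fixes f :: "real \<Rightarrow> real"
  assumes "\<forall>x\<in>{0<..<1}. f x \<in> {0<..<1}"
    and "mono_on {0<..<1} f"
  shows "\<exists>f' :: real \<Rightarrow> real.
    (\<forall>x\<in>{0<..<1}. f' x \<in> {0<..<1}) \<and> mono_on {0<..<1} f' \<and>
    (\<forall>x\<in>{0<..<1}. f' x < f x) \<and>
    (\<forall>\<rho> \<nu> \<tau> \<alpha> (n::nat) (k::nat) (l::nat).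
       \<rho> \<in> {0<..<1} \<and> \<nu> \<in> {0<..<1} \<and> \<tau> \<in> {0<..<1} \<and> \<alpha> \<in> {0<..<1} \<and>
       0 < n \<and> 1 / real n \<le> \<rho> \<and> \<rho> \<le> f' \<nu> \<and> \<nu> \<le> \<tau> \<and> \<tau> \<le> f' \<alpha> \<longrightarrow>
       (\<exists>\<zeta> \<delta> \<gamma> \<beta> \<eta>.
          \<zeta> \<in> {0<..<1} \<and> \<delta> \<in> {0<..<1} \<and> \<gamma> \<in> {0<..<1} \<and> \<beta> \<in> {0<..<1} \<and> \<eta> \<in> {0<..<1} \<and>
          \<rho> \<le> f \<eta> \<and> \<eta> \<le> f \<beta> \<and> \<beta> \<le> f \<gamma> \<and> \<gamma> \<le> f \<zeta> \<and> \<zeta> \<le> f \<nu> \<and>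
          \<tau> < \<delta> \<and> \<delta> < \<alpha> \<and>
          (\<forall>(V :: nat set) E (D::nat) Vs As Bs.
             graph V E \<and> card V = n \<and> regular V E D \<and> real D \<ge> \<alpha> * real n \<and>
             robust_partition V E D \<rho> \<nu> \<tau> k l Vs As Bs \<longrightarrow>
               clustering V E \<zeta> \<delta> \<gamma> \<beta> \<eta> (parts Vs As Bs k l) \<and>
               (\<forall>j<l. almost_bip_wit V E \<beta> (As j \<union> Bs j) (As j) (Bs j)) \<and>
               (\<forall>i<k. far_from_bipartite V E \<gamma> (Vs i)))))"
  by (rule fassm.main_fassm[OF fassm.intro[OF assms]])

end
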